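(* Let $M$ be a smooth 3-manifold with a smooth contact sub-Riemannian structure $(D,g)$, let $S\subset M$ be an embedded $C^2$ surface, and let $p\in S$ be a characteristic point. Near $p$ let $(X_1,X_2)$ be an oriented $g$-orthonormal frame of $D$, $X_0$ a vector field transverse to $D$, and $f$ a $C^2$ submersion with $S=f^{-1}(0)$ locally. For $\varepsilon>0$ let $g^\varepsilon$ be the Riemannian metric for which $(\varepsilon X_0,X_1,X_2)$ is orthonormal. Then, as $\varepsilon\to0$, $$\det \mathrm{II}^\varepsilon(p)=\frac{1}{\varepsilon^2}\left(\frac{\det\operatorname{Hess}_H f(p)}{(X_0f(p))^2}-\frac{(c^0_{12}(p))^2}{4}\right)+O(1).$$
   Context: A point $p\in S$ is characteristic if $T_pS=D_p$ (then $X_0f(p)\neq0$). The structure functions $c^k_{ij}$ are defined by $[X_j,X_i]=c^1_{ij}X_1+c^2_{ij}X_2+c^0_{ij}X_0$; in particular $c^0_{12}$ is the $X_0$-coefficient of $[X_2,X_1]$. $\operatorname{Hess}_Hf=\begin{pmatrix}X_1X_1f & X_1X_2f\\ X_2X_1f & X_2X_2f\end{pmatrix}$. With $\overline\nabla^\varepsilon$ the Levi-Civita connection of $g^\varepsilon$, the second fundamental form of $S$ is $\mathrm{II}^\varepsilon(X,Y)=$ the $g^\varepsilon$-normal component of $\overline\nabla^\varepsilon_XY$, and for any frame $(X,Y)$ of $TS$, $\det\mathrm{II}^\varepsilon=\dfrac{\langle\mathrm{II}^\varepsilon(X,X),\mathrm{II}^\varepsilon(Y,Y)\rangle_{g^\varepsilon}-\langle\mathrm{II}^\varepsilon(X,Y),\mathrm{II}^\varepsilon(X,Y)\rangle_{g^\varepsilon}}{|X|^2_{g^\varepsilon}|Y|^2_{g^\varepsilon}-\langle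 X,Y\rangle^2_{g^\varepsilon}}$ (independent of the frame). *)

theory Defs
  imports "HOL-Analysis.Analysis" "HOL-Library.Landau_Symbols"
begin

text \<open>Everything is local near the characteristic point, so the 3-manifold is
represented by a coordinate chart: an open set U of real^3. Vector fields are maps
real^3 \<Rightarrow> real^3, functions are maps real^3 \<Rightarrow> real.\<close>

definition dderiv :: "(real^3 \<Rightarrow> 'a::real_normed_vector) \<Rightarrow> real^3 \<Rightarrow> real^3 \<Rightarrow> 'a" where
  "dderiv h x v = frechet_derivative h (at x) v"

definition vf_app :: "(real^3 \<Rightarrow> real^3) \<Rightarrow> (real^3 \<Rightarrow> real) \<Rightarrow> real^3 \<Rightarrow> real" where
  "vf_app X h x = dderiv h x (X x)"

fun Ck_on :: "nat \<Rightarrow> (real^3 \<Rightarrow> 'a::real_normed_vector) \<Rightarrow> (real^3) set \<Rightarrow> bool" where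
  "Ck_on 0 h U = continuous_on U h"
| "Ck_on (Suc k) h U =
     ((\<forall>x\<in>U. h differentiable (at x)) \<and> (\<forall>i. Ck_on k (\<lambda>x. dderiv h x (axis i 1)) U))"

definition smooth_on :: "(real^3 \<Rightarrow> 'a::real_normed_vector) \<Rightarrow> (real^3) set \<Rightarrow> bool" where
  "smooth_on h U = (\<forall>k. Ck_on k h U)"

text \<open>Lie bracket [X,Y] (so that [X,Y]h = X(Yh) - Y(Xh)).\<close>
definition lie :: "(real^3 \<Rightarrow> real^3) \<Rightarrow> (real^3 \<Rightarrow> real^3) \<Rightarrow> real^3 \<Rightarrow> real^3" where
  "lie X Y x = dderiv Y x (X x) - dderiv X x (Y x)"

definition c012 :: "(real^3 \<Rightarrow> real^3) \<Rightarrow> (real^3 \<Rightarrow> real^3) \<Rightarrow> (real^3 \<Rightarrow> real^3) \<Rightarrow> real^3 \<Rightarrow> real" where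
  "c012 X0 X1 X2 x = (THE c0. \<exists>c1 c2. lie X2 X1 x = c1 *\<^sub>R X1 x + c2 *\<^sub>R X2 x + c0 *\<^sub>R X0 x)"

definition detHessH :: "(real^3 \<Rightarrow> real) \<Rightarrow> (real^3 \<Rightarrow> real^3) \<Rightarrow> (real^3 \<Rightarrow> real^3) \<Rightarrow> real^3 \<Rightarrow> real" where
  "detHessH f X1 X2 x =
     vf_app X1 (vf_app X1 f) x * vf_app X2 (vf_app X2 f) x
     - vf_app X1 (vf_app X2 f) x * vf_app X2 (vf_app X1 f) x"

text \<open>Coordinate matrix of the Riemannian metric g^eps for which (eps X0, X1, X2)
is orthonormal: with F the matrix whose columns are eps X0, X1, X2, the Gram matrix
is (F^-1)^T F^-1.\<close>
definition frame_mat :: "real \<Rightarrow> (real^3 \<Rightarrow> real^3) \<Rightarrow> (real^3 \<Rightarrow> real^3) \<Rightarrow> (real^3 \<Rightarrow> real^3) \<Rightarrow> real^3 \<Rightarrow> real^3^3" where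
  "frame_mat eps X0 X1 X2 x =
     (\<chi> i j. if j = 1 then eps * (X0 x $ i) else if j = 2 then X1 x $ i else X2 x $ i)"

definition gmetric :: "real \<Rightarrow> (real^3 \<Rightarrow> real^3) \<Rightarrow> (real^3 \<Rightarrow> real^3) \<Rightarrow> (real^3 \<Rightarrow> real^3) \<Rightarrow> real^3 \<Rightarrow> real^3^3" where
  "gmetric eps X0 X1 X2 x =
     transpose (matrix_inv (frame_mat eps X0 X1 X2 x)) ** matrix_inv (frame_mat eps X0 X1 X2 x)"

definition gip :: "(real^3 \<Rightarrow> real^3^3) \<Rightarrow> real^3 \<Rightarrow> real^3 \<Rightarrow> real^3 \<Rightarrow> real" where
  "gip G x u v = u \<bullet> (G x *v v)"

definition christ :: "(real^3 \<Rightarrow> real^3^3) \<Rightarrow> real^3 \<Rightarrow> 3 \<Rightarrow> 3 \<Rightarrow> 3 \<Rightarrow> real" where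
  "christ G x k i j = (1/2) * (\<Sum>l\<in>UNIV. matrix_inv (G x) $ k $ l *
      (dderiv (\<lambda>y. G y $ j $ l) x (axis i 1) + dderiv (\<lambda>y. G y $ i $ l) x (axis j 1)
       - dderiv (\<lambda>y. G y $ i $ j) x (axis l 1)))"

definition LC_conn :: "(real^3 \<Rightarrow> real^3^3) \<Rightarrow> (real^3 \<Rightarrow> real^3) \<Rightarrow> (real^3 \<Rightarrow> real^3) \<Rightarrow> real^3 \<Rightarrow> real^3" where
  "LC_conn G X Y x = dderiv Y x (X x)
     + (\<chi> k. \<Sum>i\<in>UNIV. \<Sum>j\<in>UNIV. christ G x k i j * (X x $ i) * (Y x $ j))"

definition tspace :: "(real^3 \<Rightarrow> real) \<Rightarrow> real^3 \<Rightarrow> (real^3) set" where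
  "tspace f x = {v. dderiv f x v = 0}"

definition ncomp :: "(real^3 \<Rightarrow> real^3^3) \<Rightarrow> (real^3 \<Rightarrow> real) \<Rightarrow> real^3 \<Rightarrow> real^3 \<Rightarrow> real^3" where
  "ncomp G f x w = (THE n. w - n \<in> tspace f x \<and> (\<forall>t\<in>tspace f x. gip G x n t = 0))"

definition sff :: "(real^3 \<Rightarrow> real^3^3) \<Rightarrow> (real^3 \<Rightarrow> real) \<Rightarrow> (real^3 \<Rightarrow> real^3) \<Rightarrow> (real^3 \<Rightarrow> real^3) \<Rightarrow> real^3 \<Rightarrow> real^3" where
  "sff G f X Y x = ncomp G f x (LC_conn G X Y x)"

definition detII :: "(real^3 \<Rightarrow> real^3^3) \<Rightarrow> (real^3 \<Rightarrow> real) \<Rightarrow> (real^3 \<Rightarrow> real^3) \<Rightarrow> (real^3 \<Rightarrow> real^3) \<Rightarrow> real^3 \<Rightarrow> real" where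
  "detII G f X Y x =
     (gip G x (sff G f X X x) (sff G f Y Y x) - gip G x (sff G f X Y x) (sff G f X Y x))
     / (gip G x (X x) (X x) * gip G x (Y x) (Y x) - (gip G x (X x) (Y x))^2)"

end

theory Submission
  imports Defs
begin

lemma dderiv_at: "(h has_derivative h') (at x) \<Longrightarrow> dderiv h x = h'"
  unfolding dderiv_def by (rule frechet_derivative_at[symmetric])

lemma dderiv_works: "h differentiable (at x) \<Longrightarrow> (h has_derivative dderiv h x) (at x)"
  unfolding dderiv_def using frechet_derivative_works by blast

lemma young_half:
  fixes f :: "real^3 \<Rightarrow> real" and g :: "real^3 \<Rightarrow> real"
  assumes U: "open U" "p \<in> U"
   and fd: "\<forall>x\<in>U. (f has_derivative f' x) (at x)"
   and gd: "(g has_derivative G) (at p)"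
   and ga: "\<forall>x\<in>U. g x = f' x a"
   and na: "norm a \<le> 1" and nb: "norm b \<le> 1" and e: "e > 0"
  shows "\<exists>d>0. \<forall>t. 0 < t \<and> t < d \<longrightarrow>
     \<bar>f (p + t *\<^sub>R a + t *\<^sub>R b) - f (p + t *\<^sub>R a) - f (p + t *\<^sub>R b) + f p - t^2 * G b\<bar> \<le> 4*e*t^2"
proof -
  obtain d0 where d0: "d0 > 0" "ball p d0 \<subseteq> U" using U openE by blast
  have lin: "linear G" using gd has_derivative_linear by blast
  obtain d1 where d1: "d1 > 0" "\<forall>y. norm (y - p) < d1 \<longrightarrow> norm (g y - g p - G (y - p)) \<le> e * norm (y - p)"
    using gd e unfolding has_derivative_at_alt by blast
  define d where "d = min d0 d1 / 2"
  have "d > 0" using d0 d1 by (simp add: d_def)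
  moreover have "\<bar>f (p + t *\<^sub>R a + t *\<^sub>R b) - f (p + t *\<^sub>R a) - f (p + t *\<^sub>R b) + f p - t^2 * G b\<bar> \<le> 4*e*t^2"
    if t: "0 < t" "t < d" for t
  proof -
    have nsum: "norm (s *\<^sub>R a + r *\<^sub>R b) \<le> s + r" if "0 \<le> s" "0 \<le> r" for s r
    proof -
      have "norm (s *\<^sub>R a + r *\<^sub>R b) \<le> norm (s *\<^sub>R a) + norm (r *\<^sub>R b)" by (rule norm_triangle_ineq)
      also have "norm (s *\<^sub>R a) \<le> s" using na that by (simp add: mult_left_le)
      also have "norm (r *\<^sub>R b) \<le> r" using nb that by (simp add: mult_left_le)
      finally show ?thesis by simp
    qed
    have dd: "2 * t < d0" "2 * t < d1" using t d_def by auto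
    have inU: "p + s *\<^sub>R a + r *\<^sub>R b \<in> U" if "0 \<le> s" "s \<le> t" "0 \<le> r" "r \<le> t" for s r
    proof -
      have "norm (s *\<^sub>R a + r *\<^sub>R b) < d0" using nsum[of s r] that dd by linarith
      then have "dist p (p + s *\<^sub>R a + r *\<^sub>R b) < d0"
        by (metis add.assoc add_diff_cancel_left' dist_commute dist_norm)
      then show ?thesis using d0 by auto
    qed
    define \<phi> where "\<phi> s = f (p + s *\<^sub>R a + t *\<^sub>R b) - f (p + s *\<^sub>R a)" for s
    have der: "(\<phi> has_derivative (\<lambda>h. h * (g (p + s *\<^sub>R a + t *\<^sub>R b) - g (p + s *\<^sub>R a)))) (at s within {0..t})"
      if "0 \<le> s" "s \<le> t" for s
    proof -
      have i1: "p + s *\<^sub>R a + t *\<^sub>R b \<in> U" using inU that t by auto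
      have i2: "p + s *\<^sub>R a \<in> U" using inU[of s 0] that t by auto
      have l1: "((\<lambda>s. p + s *\<^sub>R a + t *\<^sub>R b) has_derivative (\<lambda>h. h *\<^sub>R a)) (at s within {0..t})"
        by (auto intro!: derivative_eq_intros)
      have l2: "((\<lambda>s. p + s *\<^sub>R a) has_derivative (\<lambda>h. h *\<^sub>R a)) (at s within {0..t})"
        by (auto intro!: derivative_eq_intros)
      have c1: "((\<lambda>s. f (p + s *\<^sub>R a + t *\<^sub>R b)) has_derivative (\<lambda>h. f' (p + s *\<^sub>R a + t *\<^sub>R b) (h *\<^sub>R a))) (at s within {0..t})"
        using has_derivative_in_compose[OF l1, of f] fd i1 by (simp add: o_def has_derivative_at_withinI)
      have c2: "((\<lambda>s. f (p + s *\<^sub>R a)) has_derivative (\<lambda>h. f' (p + s *\<^sub>R a) (h *\<^sub>R a))) (at s within {0..t})"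
        using has_derivative_in_compose[OF l2, of f] fd i2 by (simp add: o_def has_derivative_at_withinI)
      have "(\<phi> has_derivative (\<lambda>h. f' (p + s *\<^sub>R a + t *\<^sub>R b) (h *\<^sub>R a) - f' (p + s *\<^sub>R a) (h *\<^sub>R a))) (at s within {0..t})"
        unfolding \<phi>_def by (rule has_derivative_diff[OF c1 c2])
      moreover have "f' (p + s *\<^sub>R a + t *\<^sub>R b) (h *\<^sub>R a) - f' (p + s *\<^sub>R a) (h *\<^sub>R a)
          = h * (g (p + s *\<^sub>R a + t *\<^sub>R b) - g (p + s *\<^sub>R a))" for h
      proof -
        have "linear (f' (p + s *\<^sub>R a + t *\<^sub>R b))" "linear (f' (p + s *\<^sub>R a))"
          using fd i1 i2 has_derivative_linear by blast+
        then show ?thesis using ga i1 i2 by (simp add: linear_scale algebra_simps)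
      qed
      ultimately show ?thesis by simp
    qed
    obtain \<xi> where xi: "\<xi> \<in> {0<..<t}" "\<phi> t - \<phi> 0 = (t - 0) * (g (p + \<xi> *\<^sub>R a + t *\<^sub>R b) - g (p + \<xi> *\<^sub>R a))"
      using mvt_simple[of 0 t \<phi>, OF t(1) der] by auto
    have n1: "norm (\<xi> *\<^sub>R a + t *\<^sub>R b) \<le> 2*t"
      using nsum[of \<xi> t] xi t by auto
    have n2: "norm (\<xi> *\<^sub>R a) \<le> t"
    proof -
      have "norm (\<xi> *\<^sub>R a) = \<xi> * norm a" using xi by simp
      also have "\<dots> \<le> \<xi>" using mult_left_le[of "norm a" \<xi>] na xi by simp
      also have "\<dots> \<le> t" using xi by simp
      finally show ?thesis .
    qed
    have b1: "\<bar>g (p + \<xi> *\<^sub>R a + t *\<^sub>R b) - g p - G (\<xi> *\<^sub>R a + t *\<^sub>R b)\<bar> \<le> e * (2*t)"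
    proof -
      have "norm (\<xi> *\<^sub>R a + t *\<^sub>R b) < d1" using n1 dd by linarith
      then have "\<bar>g (p + \<xi> *\<^sub>R a + t *\<^sub>R b) - g p - G (\<xi> *\<^sub>R a + t *\<^sub>R b)\<bar> \<le> e * norm (\<xi> *\<^sub>R a + t *\<^sub>R b)"
        using d1(2)[rule_format, of "p + \<xi> *\<^sub>R a + t *\<^sub>R b"] by (simp add: add.assoc)
      also have "\<dots> \<le> e * (2*t)" using n1 e by simp
      finally show ?thesis .
    qed
    have b2: "\<bar>g (p + \<xi> *\<^sub>R a) - g p - G (\<xi> *\<^sub>R a)\<bar> \<le> e * t"
    proof -
      have "norm (\<xi> *\<^sub>R a) < d1" using n2 dd t by linarith
      then have "\<bar>g (p + \<xi> *\<^sub>R a) - g p - G (\<xi> *\<^sub>R a)\<bar> \<le> e * norm (\<xi> *\<^sub>R a)"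
        using d1(2)[rule_format, of "p + \<xi> *\<^sub>R a"] by simp
      also have "\<dots> \<le> e * t" using n2 e by simp
      finally show ?thesis .
    qed
    have GG: "G (\<xi> *\<^sub>R a + t *\<^sub>R b) = G (\<xi> *\<^sub>R a) + t * G b"
      using lin by (simp add: linear_add linear_scale)
    define X where "X = g (p + \<xi> *\<^sub>R a + t *\<^sub>R b) - g (p + \<xi> *\<^sub>R a)"
    have H0: "\<bar>X - t * G b\<bar> \<le> 3 * e * t"
      using b1 b2 GG unfolding X_def by linarith
    have eq: "t * X - t^2 * G b = t * (X - t * G b)" by (simp add: power2_eq_square algebra_simps)
    have "\<bar>t * X - t^2 * G b\<bar> = t * \<bar>X - t * G b\<bar>" unfolding eq using t by (simp add: abs_mult)
    also have "\<dots> \<le> t * (3 * e * t)" using H0 t by (simp add: mult_left_mono)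
    also have "\<dots> = 3*(e*t^2)" by (simp add: power2_eq_square algebra_simps)
    finally have H1: "\<bar>t * X - t^2 * G b\<bar> \<le> 3*(e*t^2)" .
    have H2: "f (p + t *\<^sub>R a + t *\<^sub>R b) - f (p + t *\<^sub>R a) - f (p + t *\<^sub>R b) + f p = t * X"
      using xi(2) by (simp add: \<phi>_def X_def)
    have H4: "0 \<le> e*t^2" using e by simp
    have H5: "4*e*t^2 = 4*(e*t^2)" by simp
    show ?thesis unfolding H2 H5 using H1 H4 by linarith
  qed
  ultimately show ?thesis by blast
qed

lemma young:
  fixes f :: "real^3 \<Rightarrow> real"
  assumes U: "open U" "p \<in> U"
   and fd: "\<forall>x\<in>U. f differentiable (at x)"
   and gi: "(\<lambda>x. dderiv f x a) differentiable (at p)"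
   and gk: "(\<lambda>x. dderiv f x b) differentiable (at p)"
   and na: "norm a \<le> 1" and nb: "norm b \<le> 1"
  shows "dderiv (\<lambda>x. dderiv f x b) p a = dderiv (\<lambda>x. dderiv f x a) p b"
proof (rule ccontr)
  let ?A = "dderiv (\<lambda>x. dderiv f x a) p b" and ?B = "dderiv (\<lambda>x. dderiv f x b) p a"
  assume ne: "?B \<noteq> ?A"
  define c where "c = \<bar>?A - ?B\<bar>"
  have c: "c > 0" using ne by (simp add: c_def)
  define e where "e = c / 16"
  have e: "e > 0" using c by (simp add: e_def)
  have fd': "\<forall>x\<in>U. (f has_derivative dderiv f x) (at x)" using fd dderiv_works by blast
  obtain d1 where d1: "d1 > 0" "\<forall>t. 0 < t \<and> t < d1 \<longrightarrow>
     \<bar>f (p + t *\<^sub>R a + t *\<^sub>R b) - f (p + t *\<^sub>R a) - f (p + t *\<^sub>R b) + f p - t^2 * ?A\<bar> \<le> 4*e*t^2"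
    using young_half[OF U fd' dderiv_works[OF gi] _ na nb e] by auto
  obtain d2 where d2: "d2 > 0" "\<forall>t. 0 < t \<and> t < d2 \<longrightarrow>
     \<bar>f (p + t *\<^sub>R b + t *\<^sub>R a) - f (p + t *\<^sub>R b) - f (p + t *\<^sub>R a) + f p - t^2 * ?B\<bar> \<le> 4*e*t^2"
    using young_half[OF U fd' dderiv_works[OF gk] _ nb na e] by auto
  define t where "t = min d1 d2 / 2"
  have t: "0 < t" "t < d1" "t < d2" using d1 d2 by (auto simp: t_def)
  have comm: "p + t *\<^sub>R b + t *\<^sub>R a = p + t *\<^sub>R a + t *\<^sub>R b" by (simp add: algebra_simps)
  define D where "D = f (p + t *\<^sub>R a + t *\<^sub>R b) - f (p + t *\<^sub>R a) - f (p + t *\<^sub>R b) + f p"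
  have h1: "\<bar>D - t^2 * ?A\<bar> \<le> 4*(e*t^2)" using d1(2) t unfolding D_def by auto
  have h2': "\<bar>f (p + t *\<^sub>R b + t *\<^sub>R a) - f (p + t *\<^sub>R b) - f (p + t *\<^sub>R a) + f p - t^2 * ?B\<bar> \<le> 4*e*t^2"
    using d2(2) t by blast
  have h2: "\<bar>D - t^2 * ?B\<bar> \<le> 4*(e*t^2)" using h2' unfolding comm D_def by argo
  have "\<bar>t^2 * ?A - t^2 * ?B\<bar> \<le> 8*(e*t^2)" using h1 h2 by linarith
  also have "\<bar>t^2 * ?A - t^2 * ?B\<bar> = t^2 * c" by (simp add: c_def right_diff_distrib[symmetric] abs_mult)
  finally have "t^2 * c \<le> 8 * (e * t^2)" .
  moreover have "8 * (e * t^2) = t^2 * (c/2)" by (simp add: e_def)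
  moreover have "t^2 * (c/2) < t^2 * c" using c t by simp
  ultimately show False by linarith
qed

lemma tangent:
  fixes f h :: "real^3 \<Rightarrow> real"
  assumes V: "open V" "p \<in> V" and fc: "continuous_on V f"
    and fd: "(f has_derivative f') (at p)" and fp: "f p = 0"
    and fw: "f' w \<noteq> 0" and fv: "f' v = 0"
    and hd: "(h has_derivative h') (at p)"
    and hz: "\<forall>x\<in>V. f x = 0 \<longrightarrow> h x = 0"
  shows "h' v = 0"
proof (rule ccontr)
  assume hv: "h' v \<noteq> 0"
  have linf: "linear f'" using fd has_derivative_linear by blast
  have linh: "linear h'" using hd has_derivative_linear by blast
  define w1 where "w1 = (1 / f' w) *\<^sub>R w"
  have fw1: "f' w1 = 1" using fw linf by (simp add: w1_def linear_scale)
  define K where "K = norm v + norm w1 + 1"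
  have K: "K > 0" by (simp add: K_def add_nonneg_pos)
  define c where "c = \<bar>h' v\<bar>"
  have c: "c > 0" using hv by (simp add: c_def)
  define M where "M = \<bar>h' w1\<bar> + 1"
  have M: "M > 0" by (simp add: M_def add_nonneg_pos)
  define e where "e = min (1 / (4*K)) (c / (4*K*M))"
  have e: "e > 0" using K c M by (simp add: e_def)
  have eK: "e * K \<le> 1/4"
  proof -
    have "e \<le> 1/(4*K)" by (simp add: e_def)
    then have "e * K \<le> 1/(4*K) * K" by (rule mult_right_mono) (use K in auto)
    also have "\<dots> = 1/4" using K by simp
    finally show ?thesis .
  qed
  have eKM: "e * K * M \<le> c/4"
  proof -
    have "e \<le> c/(4*K*M)" by (simp add: e_def)
    then have "e * (K * M) \<le> c/(4*K*M) * (K*M)" by (rule mult_right_mono) (use K M in auto)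
    also have "\<dots> = c/4" using K M by simp
    finally show ?thesis by (simp add: mult.assoc)
  qed
  obtain d0 where d0: "d0 > 0" "ball p d0 \<subseteq> V" using V openE by blast
  obtain d1 where d1: "d1 > 0" "\<forall>y. norm (y - p) < d1 \<longrightarrow> norm (f y - f p - f' (y - p)) \<le> e * norm (y - p)"
    using fd e unfolding has_derivative_at_alt by blast
  obtain d2 where d2: "d2 > 0" "\<forall>y. norm (y - p) < d2 \<longrightarrow> norm (h y - h p - h' (y - p)) \<le> e * norm (y - p)"
    using hd e unfolding has_derivative_at_alt by blast
  define t where "t = min d0 (min d1 d2) / (2*K)"
  have t: "t > 0" using d0 d1 d2 K by (simp add: t_def)
  have tK: "t*K < d0" "t*K < d1" "t*K < d2" using d0 d1 d2 K by (auto simp: t_def)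
  define y where "y s = p + t *\<^sub>R v + s *\<^sub>R w1" for s
  have ny: "norm (y s - p) \<le> t * K" if "\<bar>s\<bar> \<le> t" for s
  proof -
    have "norm (y s - p) = norm (t *\<^sub>R v + s *\<^sub>R w1)" by (simp add: y_def)
    also have "\<dots> \<le> norm (t *\<^sub>R v) + norm (s *\<^sub>R w1)" by (rule norm_triangle_ineq)
    also have "norm (t *\<^sub>R v) = t * norm v" using t by simp
    also have "norm (s *\<^sub>R w1) \<le> t * norm w1" using that by (simp add: mult_right_mono)
    finally have "norm (y s - p) \<le> t * (norm v + norm w1)" by (simp add: algebra_simps)
    also have "\<dots> \<le> t * K" using t by (simp add: K_def)
    finally show ?thesis .
  qed
  have yV: "y s \<in> V" if "\<bar>s\<bar> \<le> t" for s
  proof -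
    have "dist p (y s) < d0" using ny[OF that] tK by (simp add: dist_norm norm_minus_commute)
    then show ?thesis using d0 by auto
  qed
  have lin_arg: "f' (y s - p) = s" for s
    using linf fv fw1 by (simp add: y_def linear_add linear_scale)
  have fb: "\<bar>f (y s) - s\<bar> \<le> e * (t * K)" if "\<bar>s\<bar> \<le> t" for s
  proof -
    have "\<bar>f (y s) - s\<bar> = norm (f (y s) - f p - f' (y s - p))" using fp lin_arg by simp
    also have "\<dots> \<le> e * norm (y s - p)" using d1(2) ny[OF that] tK by fastforce
    also have "\<dots> \<le> e * (t * K)" using ny[OF that] e by (simp add: mult_left_mono)
    finally show ?thesis .
  qed
  have etK: "e * (t * K) \<le> t / 4"
  proof -
    have "e * (t * K) = t * (e * K)" by (simp add: algebra_simps)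
    also have "\<dots> \<le> t * (1/4)" by (rule mult_left_mono) (use eK t in auto)
    finally show ?thesis by simp
  qed
  have "\<bar>f (y (-t)) - (-t)\<bar> \<le> e*(t*K)" by (rule fb) (use t in simp)
  then have f1: "f (y (-t)) \<le> 0" using etK t unfolding abs_le_iff by linarith
  have "\<bar>f (y t) - t\<bar> \<le> e*(t*K)" by (rule fb) (use t in simp)
  then have f2: "0 \<le> f (y t)" using etK t unfolding abs_le_iff by linarith
  have cont: "continuous_on {-t..t} (\<lambda>s. f (y s))"
  proof (rule continuous_on_compose2[OF fc])
    show "continuous_on {-t..t} y" unfolding y_def by (intro continuous_intros)
    show "y ` {-t..t} \<subseteq> V" using yV by auto
  qed
  obtain s0 where s0: "-t \<le> s0" "s0 \<le> t" "f (y s0) = 0"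
    using IVT'[of "\<lambda>s. f (y s)" "-t" 0 t, OF f1 f2 _ cont] t by auto
  have as0: "\<bar>s0\<bar> \<le> t" using s0 by auto
  have s0b: "\<bar>s0\<bar> \<le> e * (t * K)" using fb[OF as0] s0 by simp
  have hys: "h (y s0) = 0" using hz yV[OF as0] s0 by auto
  have hp: "h p = 0" using hz V fp by auto
  have hlin: "h' (y s0 - p) = t * h' v + s0 * h' w1"
    using linh by (simp add: y_def linear_add linear_scale)
  have "\<bar>t * h' v + s0 * h' w1\<bar> \<le> e * (t * K)"
  proof -
    have "\<bar>t * h' v + s0 * h' w1\<bar> = norm (h (y s0) - h p - h' (y s0 - p))" using hys hp hlin by simp
    also have "\<dots> \<le> e * norm (y s0 - p)" using d2(2) ny[OF as0] tK by fastforce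
    also have "\<dots> \<le> e * (t * K)" using ny[OF as0] e by (simp add: mult_left_mono)
    finally show ?thesis .
  qed
  moreover have "t * c = \<bar>t * h' v\<bar>" using t by (simp add: c_def abs_mult)
  moreover have "\<bar>s0 * h' w1\<bar> = \<bar>s0\<bar> * \<bar>h' w1\<bar>" by (simp add: abs_mult)
  ultimately have "t * c \<le> \<bar>s0\<bar> * \<bar>h' w1\<bar> + e * (t * K)"
    by linarith
  also have "\<bar>s0\<bar> * \<bar>h' w1\<bar> \<le> e * (t * K) * \<bar>h' w1\<bar>" using s0b by (simp add: mult_right_mono)
  finally have "t * c \<le> e * (t * K) * M" by (simp add: M_def algebra_simps)
  also have "\<dots> = t * (e * K * M)" by (simp add: algebra_simps)
  also have "\<dots> \<le> t * (c/4)" using eKM t by (simp add: mult_left_mono)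
  finally have "t * c \<le> t * (c/4)" .
  then show False using t c by simp
qed

lemma lin_expand:
  fixes L :: "real^3 \<Rightarrow> 'b::real_vector"
  assumes "linear L"
  shows "L v = (\<Sum>k\<in>UNIV. v$k *\<^sub>R L (axis k 1))"
proof -
  have "v = (\<Sum>k\<in>UNIV. v$k *\<^sub>R axis k 1)" using basis_expansion[of v] by (simp add: scalar_mult_eq_scaleR)
  then have "L v = L (\<Sum>k\<in>UNIV. v$k *\<^sub>R axis k 1)" by simp
  also have "\<dots> = (\<Sum>k\<in>UNIV. v$k *\<^sub>R L (axis k 1))" using assms by (simp add: linear_sum linear_scale)
  finally show ?thesis .
qed

lemma lin_expand_real:
  fixes L :: "real^3 \<Rightarrow> real"
  assumes "linear L"
  shows "L v = (\<Sum>k\<in>UNIV. v$k * L (axis k 1))"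
proof -
  have "L v = (\<Sum>k\<in>UNIV. v$k *\<^sub>R L (axis k 1))" by (rule lin_expand[OF assms])
  then show ?thesis by simp
qed

lemma has_derivative_nth:
  "(Z has_derivative DZ) F \<Longrightarrow> ((\<lambda>x. Z x $ k) has_derivative (\<lambda>u. DZ u $ k)) F"
  by (rule bounded_linear.has_derivative[OF bounded_linear_vec_nth])

lemma deriv_hZ:
  fixes f :: "real^3 \<Rightarrow> real" and Z :: "real^3 \<Rightarrow> real^3"
  assumes U: "open U" "p \<in> U"
    and fdU: "\<forall>x\<in>U. f differentiable (at x)"
    and pd: "\<forall>k. (\<lambda>x. dderiv f x (axis k 1)) differentiable (at p)"
    and Zd: "(Z has_derivative DZ) (at p)"
  shows "((\<lambda>x. dderiv f x (Z x)) has_derivative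
     (\<lambda>u. dderiv f p (DZ u) + (\<Sum>k\<in>UNIV. Z p $ k * dderiv (\<lambda>x. dderiv f x (axis k 1)) p u))) (at p)"
proof -
  have e1: "dderiv f x (Z x) = (\<Sum>k\<in>UNIV. Z x $ k * dderiv f x (axis k 1))" if "x \<in> U" for x
  proof -
    have "linear (dderiv f x)" using dderiv_works fdU that has_derivative_linear by blast
    then show ?thesis by (rule lin_expand_real)
  qed
  have lp: "linear (dderiv f p)" using dderiv_works fdU U has_derivative_linear by blast
  have dk: "((\<lambda>x. Z x $ k * dderiv f x (axis k 1)) has_derivative
     (\<lambda>u. Z p $ k * dderiv (\<lambda>x. dderiv f x (axis k 1)) p u + DZ u $ k * dderiv f p (axis k 1))) (at p)" for k
    by (rule has_derivative_mult[OF has_derivative_nth[OF Zd] dderiv_works]) (use pd in blast)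
  have "((\<lambda>x. \<Sum>k\<in>UNIV. Z x $ k * dderiv f x (axis k 1)) has_derivative
     (\<lambda>u. \<Sum>k\<in>UNIV. Z p $ k * dderiv (\<lambda>x. dderiv f x (axis k 1)) p u + DZ u $ k * dderiv f p (axis k 1))) (at p)"
    by (rule has_derivative_sum) (rule dk)
  moreover have "(\<Sum>k\<in>UNIV. Z p $ k * dderiv (\<lambda>x. dderiv f x (axis k 1)) p u + DZ u $ k * dderiv f p (axis k 1))
      = dderiv f p (DZ u) + (\<Sum>k\<in>UNIV. Z p $ k * dderiv (\<lambda>x. dderiv f x (axis k 1)) p u)" for u
  proof -
    have "dderiv f p (DZ u) = (\<Sum>k\<in>UNIV. DZ u $ k * dderiv f p (axis k 1))" by (rule lin_expand_real[OF lp])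
    then show ?thesis by (simp only: sum.distrib add.commute)
  qed
  ultimately have D: "((\<lambda>x. \<Sum>k\<in>UNIV. Z x $ k * dderiv f x (axis k 1)) has_derivative
     (\<lambda>u. dderiv f p (DZ u) + (\<Sum>k\<in>UNIV. Z p $ k * dderiv (\<lambda>x. dderiv f x (axis k 1)) p u))) (at p)"
    by simp
  have E: "\<And>x. x \<in> U \<Longrightarrow> (\<Sum>k\<in>UNIV. Z x $ k * dderiv f x (axis k 1)) = dderiv f x (Z x)"
    using e1 by simp
  show ?thesis
    by (rule has_derivative_transform_within_open[OF D U E])
qed

definition Hs :: "(real^3 \<Rightarrow> real) \<Rightarrow> real^3 \<Rightarrow> real^3 \<Rightarrow> real^3 \<Rightarrow> real" where
  "Hs f p u z = (\<Sum>k\<in>UNIV. z $ k * dderiv (\<lambda>x. dderiv f x (axis k 1)) p u)"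

lemma Hs_sym:
  fixes f :: "real^3 \<Rightarrow> real"
  assumes U: "open U" "p \<in> U"
    and fdU: "\<forall>x\<in>U. f differentiable (at x)"
    and pd: "\<forall>k. (\<lambda>x. dderiv f x (axis k 1)) differentiable (at p)"
  shows "Hs f p u z = Hs f p z u"
proof -
  let ?D = "\<lambda>k. dderiv (\<lambda>x. dderiv f x (axis k 1)) p"
  have lin: "linear (?D k)" for k using dderiv_works pd has_derivative_linear by blast
  have sym: "?D k (axis i 1) = ?D i (axis k 1)" for i k
    by (rule young[OF U fdU]) (use pd in auto)
  have exu: "?D k u = (\<Sum>i\<in>UNIV. u$i * ?D k (axis i 1))" for k by (rule lin_expand_real[OF lin])
  have exz: "?D k z = (\<Sum>i\<in>UNIV. z$i * ?D k (axis i 1))" for k by (rule lin_expand_real[OF lin])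
  have "Hs f p u z = (\<Sum>k\<in>UNIV. \<Sum>i\<in>UNIV. z $ k * u $ i * ?D k (axis i 1))"
    unfolding Hs_def exu by (simp add: sum_distrib_left mult.assoc)
  also have "\<dots> = (\<Sum>i\<in>UNIV. \<Sum>k\<in>UNIV. z $ k * u $ i * ?D k (axis i 1))" by (rule sum.swap)
  also have "\<dots> = (\<Sum>i\<in>UNIV. \<Sum>k\<in>UNIV. u $ i * z $ k * ?D i (axis k 1))"
    by (simp add: sym mult.commute)
  also have "\<dots> = Hs f p z u"
    unfolding Hs_def exz by (simp add: sum_distrib_left mult.assoc)
  finally show ?thesis .
qed

lemma Hs_bilinear:
  fixes f :: "real^3 \<Rightarrow> real"
  assumes pd: "\<forall>k. (\<lambda>x. dderiv f x (axis k 1)) differentiable (at p)"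
  shows "Hs f p (a *\<^sub>R u + b *\<^sub>R v) z = a * Hs f p u z + b * Hs f p v z"
    "Hs f p z (a *\<^sub>R u + b *\<^sub>R v) = a * Hs f p z u + b * Hs f p z v"
proof -
  let ?D = "\<lambda>k. dderiv (\<lambda>x. dderiv f x (axis k 1)) p"
  have lin: "linear (?D k)" for k using dderiv_works pd has_derivative_linear by blast
  have l: "?D k (a *\<^sub>R u + b *\<^sub>R v) = a * ?D k u + b * ?D k v" for k
    using lin[of k] by (simp add: linear_add linear_scale)
  have "Hs f p (a *\<^sub>R u + b *\<^sub>R v) z = (\<Sum>k\<in>UNIV. a * (z $ k * ?D k u) + b * (z $ k * ?D k v))"
    unfolding Hs_def l by (rule sum.cong) (auto simp: algebra_simps)
  also have "\<dots> = a * Hs f p u z + b * Hs f p v z"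
    unfolding Hs_def sum.distrib sum_distrib_left ..
  finally show "Hs f p (a *\<^sub>R u + b *\<^sub>R v) z = a * Hs f p u z + b * Hs f p v z" .
  have "Hs f p z (a *\<^sub>R u + b *\<^sub>R v) = (\<Sum>k\<in>UNIV. a * (u $ k * ?D k z) + b * (v $ k * ?D k z))"
    unfolding Hs_def by (rule sum.cong) (auto simp: algebra_simps)
  also have "\<dots> = a * Hs f p z u + b * Hs f p z v"
    unfolding Hs_def sum.distrib sum_distrib_left ..
  finally show "Hs f p z (a *\<^sub>R u + b *\<^sub>R v) = a * Hs f p z u + b * Hs f p z v" .
qed

lemma christ_contract:
  fixes G :: "real^3 \<Rightarrow> real^3^3" and DG :: "real^3 \<Rightarrow> real^3^3" and g u v :: "real^3"
  assumes der: "\<And>i j l. dderiv (\<lambda>y. G y $ j $ l) p (axis i 1) = DG (axis i 1) $ j $ l"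
    and lin: "linear DG"
    and sym: "\<And>k l. matrix_inv (G p) $ k $ l = matrix_inv (G p) $ l $ k"
  shows "(\<Sum>k\<in>UNIV. g$k * (\<Sum>i\<in>UNIV. \<Sum>j\<in>UNIV. christ G p k i j * u$i * v$j))
    = (1/2) * (v \<bullet> (DG u *v (matrix_inv (G p) *v g)) + u \<bullet> (DG v *v (matrix_inv (G p) *v g))
        - u \<bullet> (DG (matrix_inv (G p) *v g) *v v))"
proof -
  let ?Q = "matrix_inv (G p)"
  let ?N = "?Q *v g"
  let ?c = "\<lambda>i. DG (axis i 1)"
  have eu: "DG u = (\<Sum>i\<in>UNIV. u$i *\<^sub>R ?c i)" by (rule lin_expand[OF lin])
  have ev: "DG v = (\<Sum>i\<in>UNIV. v$i *\<^sub>R ?c i)" by (rule lin_expand[OF lin])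
  have eN: "DG ?N = (\<Sum>i\<in>UNIV. ?N$i *\<^sub>R ?c i)" by (rule lin_expand[OF lin])
  show ?thesis
    unfolding christ_def der eu ev eN
    by (simp add: sum_3 inner_vec_def matrix_vector_mult_def algebra_simps sym)
qed

lemma frame_mult:
  "frame_mat eps X0 X1 X2 x *v z = (z$1 * eps) *\<^sub>R X0 x + z$2 *\<^sub>R X1 x + z$3 *\<^sub>R X2 x"
  by (simp add: vec_eq_iff frame_mat_def matrix_vector_mult_def sum_3 algebra_simps)

lemma frame_entry:
  "frame_mat eps X0 X1 X2 x $ i $ j = (frame_mat eps X0 X1 X2 x *v axis j 1) $ i"
  by (simp add: matrix_vector_mult_basis column_def)

lemma inv_props:
  fixes M :: "real^3^3"
  assumes "invertible M"
  shows "M ** matrix_inv M = mat 1" "matrix_inv M ** M = mat 1"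
proof -
  have "\<exists>M'. M ** M' = mat 1 \<and> M' ** M = mat 1" using assms by (simp add: invertible_def)
  then have "M ** matrix_inv M = mat 1 \<and> matrix_inv M ** M = mat 1"
    unfolding matrix_inv_def by (rule someI_ex)
  then show "M ** matrix_inv M = mat 1" "matrix_inv M ** M = mat 1" by auto
qed

lemma inv_unique:
  fixes M B :: "real^3^3"
  assumes "M ** B = mat 1"
  shows "matrix_inv M = B"
proof -
  have BM: "B ** M = mat 1" using assms matrix_left_right_inverse by blast
  then have inv: "invertible M" using assms invertible_def by blast
  have "matrix_inv M = matrix_inv M ** (M ** B)" by (simp add: assms)
  also have "\<dots> = (matrix_inv M ** M) ** B" by (simp add: matrix_mul_assoc)
  also have "\<dots> = B" using inv_props[OF inv] by simp
  finally show ?thesis .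
qed

lemma frame_inj:
  assumes eps: "eps \<noteq> 0"
    and fr: "\<forall>a b. a *\<^sub>R X1 x + b *\<^sub>R X2 x = 0 \<longrightarrow> a = 0 \<and> b = 0"
    and tr: "X0 x \<notin> span {X1 x, X2 x}"
    and z: "frame_mat eps X0 X1 X2 x *v z = 0"
  shows "z = 0"
proof -
  have e: "(z$1 * eps) *\<^sub>R X0 x + z$2 *\<^sub>R X1 x + z$3 *\<^sub>R X2 x = 0" using z frame_mult by metis
  have z1: "z$1 = 0"
  proof (rule ccontr)
    assume "z$1 \<noteq> 0"
    then have c: "z$1 * eps \<noteq> 0" using eps by simp
    have h: "(z$1 * eps) *\<^sub>R X0 x = - (z$2 *\<^sub>R X1 x + z$3 *\<^sub>R X2 x)"
      by (rule iffD2[OF eq_neg_iff_add_eq_0]) (use e in \<open>simp add: add.assoc\<close>)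
    have "- (z$2 *\<^sub>R X1 x + z$3 *\<^sub>R X2 x) \<in> span {X1 x, X2 x}"
      by (intro span_neg span_add span_mul span_base) auto
    then have "(z$1 * eps) *\<^sub>R X0 x \<in> span {X1 x, X2 x}" using h by simp
    then have "(1/(z$1 * eps)) *\<^sub>R ((z$1 * eps) *\<^sub>R X0 x) \<in> span {X1 x, X2 x}" by (rule span_mul)
    then have "X0 x \<in> span {X1 x, X2 x}" using c by simp
    then show False using tr by simp
  qed
  then have "z$2 *\<^sub>R X1 x + z$3 *\<^sub>R X2 x = 0" using e by simp
  then have "z$2 = 0" "z$3 = 0" using fr by auto
  with z1 show "z = 0" by (simp add: vec_eq_iff forall_3)
qed

lemma frame_invertible:
  assumes eps: "eps \<noteq> 0"
    and fr: "\<forall>a b. a *\<^sub>R X1 x + b *\<^sub>R X2 x = 0 \<longrightarrow> a = 0 \<and> b = 0"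
    and tr: "X0 x \<notin> span {X1 x, X2 x}"
  shows "invertible (frame_mat eps X0 X1 X2 x)"
proof -
  have "\<forall>z. frame_mat eps X0 X1 X2 x *v z = 0 \<longrightarrow> z = 0" using frame_inj[of eps X1 x X2 X0, OF eps fr tr] by blast
  then have "\<exists>B. B ** frame_mat eps X0 X1 X2 x = mat 1" using matrix_left_invertible_ker by blast
  then show ?thesis using invertible_left_inverse by blast
qed

lemma differentiable_prod':
  fixes f :: "'i \<Rightarrow> real^3 \<Rightarrow> real"
  assumes "finite I" "\<forall>i\<in>I. f i differentiable (at p)"
  shows "(\<lambda>x. \<Prod>i\<in>I. f i x) differentiable (at p)"
  using assms by (induction I rule: finite_induct) (auto intro!: differentiable_mult)

lemma det_differentiable:
  fixes M :: "real^3 \<Rightarrow> real^3^3"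
  assumes "\<forall>i j. (\<lambda>x. M x $ i $ j) differentiable (at p)"
  shows "(\<lambda>x. det (M x)) differentiable (at p)"
  unfolding det_def
  by (intro differentiable_sum ballI differentiable_mult differentiable_const differentiable_prod')
     (use assms finite_permutations in auto)

lemma mat_entry: "(A::real^3^3) $ k $ j = (A *v axis j 1) $ k"
  by (simp add: matrix_vector_mult_basis column_def)

lemma inv_entry_formula:
  fixes M :: "real^3^3"
  assumes "invertible M"
  shows "matrix_inv M $ k $ j = det (\<chi> i j'. if j' = k then axis j 1 $ i else M$i$j') / det M"
proof -
  have d: "det M \<noteq> 0" using assms invertible_det_nz by blast
  have "M *v (matrix_inv M *v axis j 1) = axis j 1"
    using inv_props[OF assms] by (simp add: matrix_vector_mul_assoc)
  then have "matrix_inv M *v axis j 1 = (\<chi> k. det (\<chi> i j'. if j' = k then axis j 1 $ i else M$i$j') / det M)"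
    using cramer[OF d] by blast
  then show ?thesis by (simp add: mat_entry[of "matrix_inv M"])
qed

lemma inv_entry_differentiable:
  fixes M :: "real^3 \<Rightarrow> real^3^3"
  assumes U: "open U" "p \<in> U" and inv: "\<forall>y\<in>U. invertible (M y)"
    and md: "\<forall>i j. (\<lambda>y. M y $ i $ j) differentiable (at p)"
  shows "(\<lambda>y. matrix_inv (M y) $ k $ j) differentiable (at p)"
proof -
  have dp: "det (M p) \<noteq> 0" using inv U invertible_det_nz by blast
  have n: "(\<lambda>y. det (\<chi> i j'. if j' = k then axis j 1 $ i else M y$i$j')) differentiable (at p)"
  proof (rule det_differentiable, intro allI)
    fix i j'
    show "(\<lambda>y. (\<chi> i j'. if j' = k then axis j 1 $ i else M y$i$j') $ i $ j') differentiable (at p)"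
      by (cases "j' = k") (use md in auto)
  qed
  have "(\<lambda>y. det (\<chi> i j'. if j' = k then axis j 1 $ i else M y$i$j') / det (M y)) differentiable (at p)"
    by (rule differentiable_divide[OF n det_differentiable[OF md] dp])
  then obtain D where D: "((\<lambda>y. det (\<chi> i j'. if j' = k then axis j 1 $ i else M y$i$j') / det (M y)) has_derivative D) (at p)"
    unfolding differentiable_def by blast
  have "((\<lambda>y. matrix_inv (M y) $ k $ j) has_derivative D) (at p)"
    by (rule has_derivative_transform_within_open[OF D U]) (use inv inv_entry_formula in auto)
  then show ?thesis unfolding differentiable_def by blast
qed

definition DAm :: "(real^3 \<Rightarrow> real^3^3) \<Rightarrow> real^3 \<Rightarrow> real^3 \<Rightarrow> real^3^3" where
  "DAm M p h = (\<chi> k j. dderiv (\<lambda>y. matrix_inv (M y) $ k $ j) p h)"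

lemma inv_deriv:
  fixes M :: "real^3 \<Rightarrow> real^3^3"
  assumes U: "open U" "p \<in> U" and inv: "\<forall>y\<in>U. invertible (M y)"
    and md: "\<forall>i j. ((\<lambda>y. M y $ i $ j) has_derivative (\<lambda>h. DM h $ i $ j)) (at p)"
  shows "\<forall>k j. ((\<lambda>y. matrix_inv (M y) $ k $ j) has_derivative (\<lambda>h. DAm M p h $ k $ j)) (at p)"
    and "DAm M p h = - (matrix_inv (M p) ** DM h ** matrix_inv (M p))"
proof -
  have md': "\<forall>i j. (\<lambda>y. M y $ i $ j) differentiable (at p)" using md differentiable_def by blast
  have ad: "((\<lambda>y. matrix_inv (M y) $ k $ j) has_derivative (\<lambda>h. DAm M p h $ k $ j)) (at p)" for k j
    unfolding DAm_def using dderiv_works[OF inv_entry_differentiable[OF U inv md']] by simp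
  then show "\<forall>k j. ((\<lambda>y. matrix_inv (M y) $ k $ j) has_derivative (\<lambda>h. DAm M p h $ k $ j)) (at p)" by blast
  let ?A = "\<lambda>y. matrix_inv (M y)"
  have z: "(DAm M p h ** M p + ?A p ** DM h) $ i $ j = 0" for i j
  proof -
    have d1: "((\<lambda>y. \<Sum>k\<in>UNIV. ?A y $ i $ k * M y $ k $ j) has_derivative
        (\<lambda>h. \<Sum>k\<in>UNIV. ?A p $ i $ k * DM h $ k $ j + DAm M p h $ i $ k * M p $ k $ j)) (at p)"
      by (rule has_derivative_sum) (rule has_derivative_mult[OF ad], use md in blast)
    have e: "(\<Sum>k\<in>UNIV. ?A y $ i $ k * M y $ k $ j) = mat 1 $ i $ j" if "y \<in> U" for y
    proof -
      have "?A y ** M y = mat 1" using inv_props inv that by blast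
      then have "(?A y ** M y) $ i $ j = mat 1 $ i $ j" by simp
      then show ?thesis by (simp add: matrix_matrix_mult_def)
    qed
    have d2: "((\<lambda>y. \<Sum>k\<in>UNIV. ?A y $ i $ k * M y $ k $ j) has_derivative (\<lambda>h. 0)) (at p)"
      by (rule has_derivative_transform_within_open[OF has_derivative_const U]) (use e in auto)
    have "(\<lambda>h. \<Sum>k\<in>UNIV. ?A p $ i $ k * DM h $ k $ j + DAm M p h $ i $ k * M p $ k $ j) = (\<lambda>h. 0)"
      using has_derivative_unique[OF d1 d2] .
    then have "(\<Sum>k\<in>UNIV. ?A p $ i $ k * DM h $ k $ j + DAm M p h $ i $ k * M p $ k $ j) = 0" by metis
    then show ?thesis by (simp add: matrix_matrix_mult_def sum.distrib add.commute)
  qed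
  then have z': "DAm M p h ** M p = - (?A p ** DM h)"
    by (simp add: vec_eq_iff eq_neg_iff_add_eq_0)
  have "DAm M p h = DAm M p h ** (M p ** ?A p)" using inv_props inv U by simp
  also have "\<dots> = (DAm M p h ** M p) ** ?A p" by (simp add: matrix_mul_assoc)
  also have "\<dots> = - (?A p ** DM h ** ?A p)" unfolding z'
    by (simp add: vec_eq_iff matrix_matrix_mult_def sum_negf)
  finally show "DAm M p h = - (matrix_inv (M p) ** DM h ** matrix_inv (M p))" .
qed

definition grad :: "(real^3 \<Rightarrow> real) \<Rightarrow> real^3 \<Rightarrow> real^3" where
  "grad f p = (\<chi> k. dderiv f p (axis k 1))"

lemma df_inner:
  assumes "f differentiable (at p)"
  shows "dderiv f p z = grad f p \<bullet> z"
proof -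
  have "linear (dderiv f p)" using dderiv_works[OF assms] has_derivative_linear by blast
  then have "dderiv f p z = (\<Sum>k\<in>UNIV. z$k * dderiv f p (axis k 1))" by (rule lin_expand_real)
  then show ?thesis by (simp add: grad_def inner_vec_def mult.commute)
qed

lemma inner_mat: "(x::real^3) \<bullet> (M *v y) = (transpose M *v x) \<bullet> y"
  by (simp add: dot_lmul_matrix)

lemma posdef:
  fixes A :: "real^3^3"
  assumes "invertible A" "z \<noteq> 0"
  shows "z \<bullet> ((transpose A ** A) *v z) > 0"
proof -
  have "z \<bullet> ((transpose A ** A) *v z) = z \<bullet> (transpose A *v (A *v z))"
    by (simp only: matrix_vector_mul_assoc)
  also have "\<dots> = (A *v z) \<bullet> (A *v z)" by (subst inner_mat) simp
  finally have "z \<bullet> ((transpose A ** A) *v z) = (A *v z) \<bullet> (A *v z)" .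
  moreover have "A *v z \<noteq> 0"
  proof
    assume "A *v z = 0"
    then have "matrix_inv A *v (A *v z) = 0" by simp
    then have "z = 0" using inv_props[OF assms(1)] by (simp add: matrix_vector_mul_assoc)
    then show False using assms by simp
  qed
  ultimately show ?thesis by simp
qed

lemma gram_inv:
  fixes A :: "real^3^3"
  assumes "invertible A"
  shows "(transpose A ** A) ** (matrix_inv A ** transpose (matrix_inv A)) = mat 1"
    "matrix_inv (transpose A ** A) = matrix_inv A ** transpose (matrix_inv A)"
    "invertible (transpose A ** A)"
proof -
  let ?B = "matrix_inv A"
  have "(transpose A ** A) ** (?B ** transpose ?B) = transpose A ** (A ** ?B) ** transpose ?B"
    by (simp add: matrix_mul_assoc)
  also have "\<dots> = transpose A ** transpose ?B" using inv_props[OF assms] by simp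
  also have "\<dots> = transpose (?B ** A)" by (simp only: matrix_transpose_mul)
  also have "\<dots> = mat 1" using inv_props[OF assms] by simp
  finally show 1: "(transpose A ** A) ** (?B ** transpose ?B) = mat 1" .
  then show "matrix_inv (transpose A ** A) = ?B ** transpose ?B" by (rule inv_unique)
  show "invertible (transpose A ** A)" using 1 matrix_left_right_inverse invertible_def by blast
qed

lemma ncomp_formula:
  fixes G :: "real^3 \<Rightarrow> real^3^3" and A :: "real^3^3"
  assumes fd: "f differentiable (at p)"
    and GA: "G p = transpose A ** A" and Ainv: "invertible A"
    and nz: "grad f p \<bullet> (matrix_inv (G p) *v grad f p) \<noteq> 0"
  shows "ncomp G f p w = ((grad f p \<bullet> w) / (grad f p \<bullet> (matrix_inv (G p) *v grad f p)))
          *\<^sub>R (matrix_inv (G p) *v grad f p)"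
proof -
  let ?g = "grad f p"
  let ?N = "matrix_inv (G p) *v ?g"
  let ?c = "(?g \<bullet> w) / (?g \<bullet> ?N)"
  let ?n0 = "?c *\<^sub>R ?N"
  have ts: "tspace f p = {z. ?g \<bullet> z = 0}" unfolding tspace_def using df_inner[OF fd] by simp
  have Gsym: "transpose (G p) = G p" by (simp add: GA matrix_transpose_mul)
  have Ginv: "invertible (G p)" unfolding GA by (rule gram_inv(3)[OF Ainv])
  have GN: "G p *v ?N = ?g" using inv_props[OF Ginv] by (simp add: matrix_vector_mul_assoc)
  have gipN: "gip G p ?N t = ?g \<bullet> t" for t
    unfolding gip_def by (subst inner_mat) (simp add: Gsym GN)
  have P: "w - ?n0 \<in> tspace f p \<and> (\<forall>t\<in>tspace f p. gip G p ?n0 t = 0)"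
  proof
    show "w - ?n0 \<in> tspace f p" unfolding ts using nz by (simp add: inner_diff_right)
    show "\<forall>t\<in>tspace f p. gip G p ?n0 t = 0"
      unfolding ts using gipN by (simp add: gip_def)
  qed
  have U: "n = ?n0" if n: "w - n \<in> tspace f p \<and> (\<forall>t\<in>tspace f p. gip G p n t = 0)" for n
  proof (rule ccontr)
    assume ne: "n \<noteq> ?n0"
    let ?d = "n - ?n0"
    have dt: "?d \<in> tspace f p"
    proof -
      have "?d = (w - ?n0) - (w - n)" by simp
      then show ?thesis using P n unfolding ts by (simp add: inner_diff_right)
    qed
    have "gip G p n ?d = 0" using n dt by blast
    moreover have "gip G p ?n0 ?d = 0" using P dt by blast
    ultimately have "?d \<bullet> (G p *v ?d) = 0" unfolding gip_def by (simp add: inner_diff_left)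
    moreover have "?d \<bullet> ((transpose A ** A) *v ?d) > 0" by (rule posdef[OF Ainv]) (use ne in simp)
    then have "?d \<bullet> (G p *v ?d) > 0" unfolding GA .
    ultimately show False by simp
  qed
  show ?thesis unfolding ncomp_def
  proof (rule the_equality)
    show "w - ?n0 \<in> tspace f p \<and> (\<forall>t\<in>tspace f p. gip G p ?n0 t = 0)" by (rule P)
    fix n assume "w - n \<in> tspace f p \<and> (\<forall>t\<in>tspace f p. gip G p n t = 0)"
    then show "n = ?n0" by (rule U)
  qed
qed

lemma idx3: "(2::3) \<noteq> 1" "(3::3) \<noteq> 1" "(3::3) \<noteq> 2" "(1::3) \<noteq> 2" "(1::3) \<noteq> 3" "(2::3) \<noteq> 3"
  by simp_all

lemma axis_nth3: "axis (1::3) (1::real) $ 1 = 1" "axis (1::3) (1::real) $ 2 = 0" "axis (1::3) (1::real) $ 3 = 0"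
  "axis (2::3) (1::real) $ 1 = 0" "axis (2::3) (1::real) $ 2 = 1" "axis (2::3) (1::real) $ 3 = 0"
  "axis (3::3) (1::real) $ 1 = 0" "axis (3::3) (1::real) $ 2 = 0" "axis (3::3) (1::real) $ 3 = 1"
  by (simp_all add: axis_def)

context
  fixes X0 X1 X2 :: "real^3 \<Rightarrow> real^3" and p :: "real^3"
  assumes fr: "\<forall>a b. a *\<^sub>R X1 p + b *\<^sub>R X2 p = 0 \<longrightarrow> a = 0 \<and> b = 0"
    and tr: "X0 p \<notin> span {X1 p, X2 p}"
begin

lemma F1_inv: "invertible (frame_mat 1 X0 X1 X2 p)"
  by (rule frame_invertible[of 1 X1 p X2 X0, OF _ fr tr]) simp

lemma K_decomp:
  "w = (matrix_inv (frame_mat 1 X0 X1 X2 p) *v w)$1 *\<^sub>R X0 p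
     + (matrix_inv (frame_mat 1 X0 X1 X2 p) *v w)$2 *\<^sub>R X1 p
     + (matrix_inv (frame_mat 1 X0 X1 X2 p) *v w)$3 *\<^sub>R X2 p"
proof -
  let ?F = "frame_mat 1 X0 X1 X2 p"
  have "w = ?F *v (matrix_inv ?F *v w)"
    using inv_props[OF F1_inv] by (simp add: matrix_vector_mul_assoc)
  then show ?thesis by (metis frame_mult mult_1_right)
qed

lemma K_basis:
  "matrix_inv (frame_mat 1 X0 X1 X2 p) *v X0 p = axis 1 1"
  "matrix_inv (frame_mat 1 X0 X1 X2 p) *v X1 p = axis 2 1"
  "matrix_inv (frame_mat 1 X0 X1 X2 p) *v X2 p = axis 3 1"
proof -
  let ?F = "frame_mat 1 X0 X1 X2 p"
  have c: "matrix_inv ?F *v (?F *v z) = z" for z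
    using inv_props[OF F1_inv] by (simp add: matrix_vector_mul_assoc)
  have "?F *v axis 1 1 = X0 p" "?F *v axis 2 1 = X1 p" "?F *v axis 3 1 = X2 p"
    by (simp_all add: frame_mult axis_nth3)
  then show "matrix_inv ?F *v X0 p = axis 1 1" "matrix_inv ?F *v X1 p = axis 2 1"
    "matrix_inv ?F *v X2 p = axis 3 1" using c by metis+
qed

lemma Ae_vec:
  assumes eps: "eps \<noteq> 0"
  shows "matrix_inv (frame_mat eps X0 X1 X2 p) *v w =
    (\<chi> i. if i = 1 then (matrix_inv (frame_mat 1 X0 X1 X2 p) *v w)$1 / eps
           else (matrix_inv (frame_mat 1 X0 X1 X2 p) *v w)$i)"
proof -
  let ?F = "frame_mat eps X0 X1 X2 p"
  let ?K = "matrix_inv (frame_mat 1 X0 X1 X2 p)"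
  let ?z = "(\<chi> i. if i = 1 then (?K *v w)$1 / eps else (?K *v w)$i) :: real^3"
  have inv: "invertible ?F" by (rule frame_invertible[of eps X1 p X2 X0, OF eps fr tr])
  have "?F *v ?z = w" using eps by (simp add: frame_mult idx3 K_decomp[symmetric])
  then have "matrix_inv ?F *v (?F *v ?z) = matrix_inv ?F *v w" by simp
  then show ?thesis using inv_props[OF inv] by (simp add: matrix_vector_mul_assoc)
qed

end

lemma frame_deriv:
  assumes d0: "(X0 has_derivative DX0) (at p)" and d1: "(X1 has_derivative DX1) (at p)"
    and d2: "(X2 has_derivative DX2) (at p)"
  shows "((\<lambda>y. frame_mat eps X0 X1 X2 y $ i $ j) has_derivative
           (\<lambda>h. frame_mat eps (\<lambda>_. DX0 h) (\<lambda>_. DX1 h) (\<lambda>_. DX2 h) p $ i $ j)) (at p)"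
proof (cases "j = 1")
  case True
  then show ?thesis unfolding frame_mat_def
    by (simp add: has_derivative_mult_right has_derivative_nth[OF d0])
next
  case False
  note F = False
  show ?thesis
  proof (cases "j = 2")
    case True
    then show ?thesis using F unfolding frame_mat_def by (simp add: has_derivative_nth[OF d1])
  next
    case False
    then show ?thesis using F unfolding frame_mat_def by (simp add: has_derivative_nth[OF d2])
  qed
qed

definition DGm :: "real \<Rightarrow> (real^3 \<Rightarrow> real^3) \<Rightarrow> (real^3 \<Rightarrow> real^3) \<Rightarrow> (real^3 \<Rightarrow> real^3) \<Rightarrow> real^3 \<Rightarrow> real^3 \<Rightarrow> real^3^3" where
  "DGm eps X0 X1 X2 p h =
     transpose (DAm (frame_mat eps X0 X1 X2) p h) ** matrix_inv (frame_mat eps X0 X1 X2 p)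
     + transpose (matrix_inv (frame_mat eps X0 X1 X2 p)) ** DAm (frame_mat eps X0 X1 X2) p h"

lemma gmetric_deriv:
  assumes U: "open U" "p \<in> U" and eps: "eps \<noteq> 0"
    and fr: "\<forall>x\<in>U. \<forall>a b. a *\<^sub>R X1 x + b *\<^sub>R X2 x = 0 \<longrightarrow> a = 0 \<and> b = 0"
    and tr: "\<forall>x\<in>U. X0 x \<notin> span {X1 x, X2 x}"
    and d0: "(X0 has_derivative DX0) (at p)" and d1: "(X1 has_derivative DX1) (at p)"
    and d2: "(X2 has_derivative DX2) (at p)"
  shows "((\<lambda>y. gmetric eps X0 X1 X2 y $ j $ l) has_derivative (\<lambda>h. DGm eps X0 X1 X2 p h $ j $ l)) (at p)"
    and "DAm (frame_mat eps X0 X1 X2) p h = - (matrix_inv (frame_mat eps X0 X1 X2 p)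
            ** frame_mat eps (\<lambda>_. DX0 h) (\<lambda>_. DX1 h) (\<lambda>_. DX2 h) p ** matrix_inv (frame_mat eps X0 X1 X2 p))"
proof -
  let ?M = "frame_mat eps X0 X1 X2"
  let ?DM = "\<lambda>h. frame_mat eps (\<lambda>_. DX0 h) (\<lambda>_. DX1 h) (\<lambda>_. DX2 h) p"
  have inv: "\<forall>y\<in>U. invertible (?M y)"
    using frame_invertible[OF eps] fr tr by blast
  have md: "\<forall>i j. ((\<lambda>y. ?M y $ i $ j) has_derivative (\<lambda>h. ?DM h $ i $ j)) (at p)"
    using frame_deriv[OF d0 d1 d2] by blast
  note ID = inv_deriv[OF U inv md]
  show "DAm ?M p h = - (matrix_inv (?M p) ** ?DM h ** matrix_inv (?M p))" by (rule ID(2))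
  have e: "gmetric eps X0 X1 X2 y $ j $ l = (\<Sum>k\<in>UNIV. matrix_inv (?M y) $ k $ j * matrix_inv (?M y) $ k $ l)" for y
    by (simp add: gmetric_def matrix_matrix_mult_def transpose_def)
  have "((\<lambda>y. \<Sum>k\<in>UNIV. matrix_inv (?M y) $ k $ j * matrix_inv (?M y) $ k $ l) has_derivative
     (\<lambda>h. \<Sum>k\<in>UNIV. matrix_inv (?M p) $ k $ j * DAm ?M p h $ k $ l + DAm ?M p h $ k $ j * matrix_inv (?M p) $ k $ l)) (at p)"
    by (rule has_derivative_sum) (rule has_derivative_mult, use ID(1) in blast, use ID(1) in blast)
  moreover have "(\<Sum>k\<in>UNIV. matrix_inv (?M p) $ k $ j * DAm ?M p h $ k $ l + DAm ?M p h $ k $ j * matrix_inv (?M p) $ k $ l)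
      = DGm eps X0 X1 X2 p h $ j $ l" for h
    by (simp add: DGm_def matrix_matrix_mult_def transpose_def sum.distrib add.commute)
  ultimately show "((\<lambda>y. gmetric eps X0 X1 X2 y $ j $ l) has_derivative (\<lambda>h. DGm eps X0 X1 X2 p h $ j $ l)) (at p)"
    unfolding e by simp
qed

definition GamP :: "(real^3 \<Rightarrow> real^3^3) \<Rightarrow> real^3 \<Rightarrow> real^3 \<Rightarrow> real^3 \<Rightarrow> real" where
  "GamP DG N u v = (1/2) * (v \<bullet> (DG u *v N) + u \<bullet> (DG v *v N) - u \<bullet> (DG N *v v))"

lemma GamP_bilin:
  assumes lin: "linear DG"
  shows "GamP DG N (a *\<^sub>R u + b *\<^sub>R v) w = a * GamP DG N u w + b * GamP DG N v w"
    "GamP DG N w (a *\<^sub>R u + b *\<^sub>R v) = a * GamP DG N w u + b * GamP DG N w v"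
proof -
  have l: "DG (a *\<^sub>R u + b *\<^sub>R v) = a *\<^sub>R DG u + b *\<^sub>R DG v"
    using lin by (simp add: linear_add linear_scale)
  have sv: "(c *\<^sub>R M) *v z = c *\<^sub>R (M *v z)" for c and M :: "real^3^3" and z
    by (simp add: scaleR_matrix_vector_assoc)
  show "GamP DG N (a *\<^sub>R u + b *\<^sub>R v) w = a * GamP DG N u w + b * GamP DG N v w"
    unfolding GamP_def l
    by (simp add: matrix_vector_mult_add_rdistrib sv inner_add_left inner_add_right algebra_simps)
  show "GamP DG N w (a *\<^sub>R u + b *\<^sub>R v) = a * GamP DG N w u + b * GamP DG N w v"
    unfolding GamP_def l
    by (simp add: matrix_vector_mult_add_rdistrib matrix_vector_right_distrib matrix_vector_mult_scaleR
        sv inner_add_left inner_add_right algebra_simps)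
qed

lemma GamP_sym:
  assumes sym: "transpose (DG N) = DG N"
  shows "GamP DG N u v = GamP DG N v u"
proof -
  have "u \<bullet> (DG N *v v) = v \<bullet> (DG N *v u)"
    by (subst inner_mat) (simp add: sym inner_commute)
  then show ?thesis unfolding GamP_def by simp
qed

lemma quartic:
  fixes m11 m12 m21 m22 P11 P12 P22 :: real
  shows "(m11*m11*P11 + m11*m12*P12 + m12*m11*P12 + m12*m12*P22) *
         (m21*m21*P11 + m21*m22*P12 + m22*m21*P12 + m22*m22*P22)
       - (m11*m21*P11 + m11*m22*P12 + m12*m21*P12 + m12*m22*P22)^2
       = (m11*m22 - m12*m21)^2 * (P11*P22 - P12^2)"
  by (simp add: power2_eq_square algebra_simps)

context
  fixes X0 X1 X2 :: "real^3 \<Rightarrow> real^3" and p :: "real^3" and eps :: real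
    and DX0 DX1 DX2 :: "real^3 \<Rightarrow> real^3"
  assumes fr: "\<forall>a b. a *\<^sub>R X1 p + b *\<^sub>R X2 p = 0 \<longrightarrow> a = 0 \<and> b = 0"
    and tr: "X0 p \<notin> span {X1 p, X2 p}"
    and eps: "eps \<noteq> 0"
begin

lemma G2:
  "frame_mat eps (\<lambda>_. DX0 h) (\<lambda>_. DX1 h) (\<lambda>_. DX2 h) p *v (matrix_inv (frame_mat eps X0 X1 X2 p) *v w)
   = (matrix_inv (frame_mat 1 X0 X1 X2 p) *v w)$1 *\<^sub>R DX0 h
   + (matrix_inv (frame_mat 1 X0 X1 X2 p) *v w)$2 *\<^sub>R DX1 h
   + (matrix_inv (frame_mat 1 X0 X1 X2 p) *v w)$3 *\<^sub>R DX2 h"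
  using eps by (simp add: frame_mult Ae_vec[of X1 p X2 X0 eps, OF fr tr eps] idx3)

lemma G4:
  "(matrix_inv (frame_mat eps X0 X1 X2 p) *v a) \<bullet> (matrix_inv (frame_mat eps X0 X1 X2 p) *v b)
   = (matrix_inv (frame_mat 1 X0 X1 X2 p) *v a)$1 * (matrix_inv (frame_mat 1 X0 X1 X2 p) *v b)$1 / eps^2
   + (matrix_inv (frame_mat 1 X0 X1 X2 p) *v a)$2 * (matrix_inv (frame_mat 1 X0 X1 X2 p) *v b)$2
   + (matrix_inv (frame_mat 1 X0 X1 X2 p) *v a)$3 * (matrix_inv (frame_mat 1 X0 X1 X2 p) *v b)$3"
  by (simp add: Ae_vec[of X1 p X2 X0 eps, OF fr tr eps] inner_vec_def sum_3 idx3 power2_eq_square)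

lemma G3:
  assumes DA: "DAm (frame_mat eps X0 X1 X2) p h = - (matrix_inv (frame_mat eps X0 X1 X2 p)
            ** frame_mat eps (\<lambda>_. DX0 h) (\<lambda>_. DX1 h) (\<lambda>_. DX2 h) p ** matrix_inv (frame_mat eps X0 X1 X2 p))"
  shows "w \<bullet> (DGm eps X0 X1 X2 p h *v z) =
    - ((matrix_inv (frame_mat eps X0 X1 X2 p) *v (frame_mat eps (\<lambda>_. DX0 h) (\<lambda>_. DX1 h) (\<lambda>_. DX2 h) p *v (matrix_inv (frame_mat eps X0 X1 X2 p) *v w)))
          \<bullet> (matrix_inv (frame_mat eps X0 X1 X2 p) *v z)
       + (matrix_inv (frame_mat eps X0 X1 X2 p) *v w)
          \<bullet> (matrix_inv (frame_mat eps X0 X1 X2 p) *v (frame_mat eps (\<lambda>_. DX0 h) (\<lambda>_. DX1 h) (\<lambda>_. DX2 h) p *v (matrix_inv (frame_mat eps X0 X1 X2 p) *v z))))"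
proof -
  let ?A = "matrix_inv (frame_mat eps X0 X1 X2 p)"
  let ?M = "frame_mat eps (\<lambda>_. DX0 h) (\<lambda>_. DX1 h) (\<lambda>_. DX2 h) p"
  let ?D = "DAm (frame_mat eps X0 X1 X2) p h"
  have neg: "(- M) *v x = - (M *v x)" for M :: "real^3^3" and x
    by (simp add: vec_eq_iff matrix_vector_mult_def sum_negf)
  have "w \<bullet> (DGm eps X0 X1 X2 p h *v z) = w \<bullet> (transpose ?D *v (?A *v z)) + w \<bullet> (transpose ?A *v (?D *v z))"
    unfolding DGm_def by (simp add: matrix_vector_mult_add_rdistrib inner_add_right matrix_vector_mul_assoc[symmetric])
  also have "w \<bullet> (transpose ?D *v (?A *v z)) = (?D *v w) \<bullet> (?A *v z)" by (subst inner_mat) simp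
  also have "w \<bullet> (transpose ?A *v (?D *v z)) = (?A *v w) \<bullet> (?D *v z)" by (subst inner_mat) simp
  also have "?D *v w = - (?A *v (?M *v (?A *v w)))" unfolding DA
    by (simp add: matrix_vector_mul_assoc neg matrix_mul_assoc)
  also have "?D *v z = - (?A *v (?M *v (?A *v z)))" unfolding DA
    by (simp add: matrix_vector_mul_assoc neg matrix_mul_assoc)
  finally show ?thesis by (simp add: inner_minus_left inner_minus_right)
qed

end

definition ipK :: "real^3^3 \<Rightarrow> real \<Rightarrow> real^3 \<Rightarrow> real^3 \<Rightarrow> real" where
  "ipK K eps a b = (K *v a)$1 * (K *v b)$1 / eps^2 + (K *v a)$2 * (K *v b)$2 + (K *v a)$3 * (K *v b)$3"

definition LK :: "real^3^3 \<Rightarrow> (real^3 \<Rightarrow> real^3) \<Rightarrow> (real^3 \<Rightarrow> real^3) \<Rightarrow> (real^3 \<Rightarrow> real^3) \<Rightarrow> real^3 \<Rightarrow> real^3 \<Rightarrow> real^3" where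
  "LK K DX0 DX1 DX2 h w = (K *v w)$1 *\<^sub>R DX0 h + (K *v w)$2 *\<^sub>R DX1 h + (K *v w)$3 *\<^sub>R DX2 h"

lemma inner_DG:
  assumes fr: "\<forall>a b. a *\<^sub>R X1 p + b *\<^sub>R X2 p = 0 \<longrightarrow> a = 0 \<and> b = 0"
    and tr: "X0 p \<notin> span {X1 p, X2 p}"
    and eps: "eps \<noteq> 0"
    and DA: "DAm (frame_mat eps X0 X1 X2) p h = - (matrix_inv (frame_mat eps X0 X1 X2 p)
            ** frame_mat eps (\<lambda>_. DX0 h) (\<lambda>_. DX1 h) (\<lambda>_. DX2 h) p ** matrix_inv (frame_mat eps X0 X1 X2 p))"
  shows "w \<bullet> (DGm eps X0 X1 X2 p h *v z) =
     - (ipK (matrix_inv (frame_mat 1 X0 X1 X2 p)) eps (LK (matrix_inv (frame_mat 1 X0 X1 X2 p)) DX0 DX1 DX2 h w) z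
      + ipK (matrix_inv (frame_mat 1 X0 X1 X2 p)) eps w (LK (matrix_inv (frame_mat 1 X0 X1 X2 p)) DX0 DX1 DX2 h z))"
  unfolding G3[of X1 p X2 X0 eps h DX0 DX1 DX2, OF fr tr eps DA] G2[of X1 p X2 X0 eps DX0 h DX1 DX2, OF fr tr eps] G4[of X1 p X2 X0 eps, OF fr tr eps] ipK_def LK_def ..

lemma GamP_explicit:
  assumes fr: "\<forall>a b. a *\<^sub>R X1 p + b *\<^sub>R X2 p = 0 \<longrightarrow> a = 0 \<and> b = 0"
    and tr: "X0 p \<notin> span {X1 p, X2 p}"
    and eps: "eps \<noteq> 0"
    and DA: "\<And>h. DAm (frame_mat eps X0 X1 X2) p h = - (matrix_inv (frame_mat eps X0 X1 X2 p)
            ** frame_mat eps (\<lambda>_. DX0 h) (\<lambda>_. DX1 h) (\<lambda>_. DX2 h) p ** matrix_inv (frame_mat eps X0 X1 X2 p))"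
    and l0: "linear DX0" and l1: "linear DX1" and l2: "linear DX2"
    and Kb: "K *v X0 p = axis 1 1" "K *v X1 p = axis 2 1" "K *v X2 p = axis 3 1"
    and Kdef: "K = matrix_inv (frame_mat 1 X0 X1 X2 p)"
    and N: "N = (eps^2 * a0) *\<^sub>R X0 p"
  shows "GamP (DGm eps X0 X1 X2 p) N (X1 p) (X1 p) =
           - a0 * (K *v DX1 (X1 p))$1 + eps^2 * (a0 * (- (K *v DX0 (X1 p))$2 + (K *v DX1 (X0 p))$2))"
    "GamP (DGm eps X0 X1 X2 p) N (X2 p) (X2 p) =
           - a0 * (K *v DX2 (X2 p))$1 + eps^2 * (a0 * (- (K *v DX0 (X2 p))$3 + (K *v DX2 (X0 p))$3))"
    "GamP (DGm eps X0 X1 X2 p) N (X1 p) (X2 p) =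
           - (a0/2) * ((K *v DX2 (X1 p))$1 + (K *v DX1 (X2 p))$1)
           + eps^2 * ((a0/2) * (- (K *v DX0 (X1 p))$3 - (K *v DX0 (X2 p))$2 + (K *v DX1 (X0 p))$3 + (K *v DX2 (X0 p))$2))"
proof -
  have ID: "w \<bullet> (DGm eps X0 X1 X2 p h *v z) = - (ipK K eps (LK K DX0 DX1 DX2 h w) z + ipK K eps w (LK K DX0 DX1 DX2 h z))" for w h z
    unfolding Kdef by (rule inner_DG[OF fr tr eps DA])
  have LKb: "LK K DX0 DX1 DX2 h (X0 p) = DX0 h" "LK K DX0 DX1 DX2 h (X1 p) = DX1 h" "LK K DX0 DX1 DX2 h (X2 p) = DX2 h" for h
    by (simp_all add: LK_def Kb axis_nth3)
  have LKs: "LK K DX0 DX1 DX2 h (c *\<^sub>R w) = c *\<^sub>R LK K DX0 DX1 DX2 h w" for h c w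
    by (simp add: LK_def matrix_vector_mult_scaleR algebra_simps)
  have LKh: "LK K DX0 DX1 DX2 (c *\<^sub>R h) w = c *\<^sub>R LK K DX0 DX1 DX2 h w" for h c w
    using l0 l1 l2 by (simp add: LK_def linear_scale algebra_simps)
  have ipb: "ipK K eps a (X1 p) = (K *v a)$2" "ipK K eps a (X2 p) = (K *v a)$3"
    "ipK K eps (X1 p) a = (K *v a)$2" "ipK K eps (X2 p) a = (K *v a)$3" for a
    by (simp_all add: ipK_def Kb axis_nth3)
  have ipN: "ipK K eps a N = a0 * (K *v a)$1" "ipK K eps N a = a0 * (K *v a)$1" for a
    using eps by (simp_all add: ipK_def N matrix_vector_mult_scaleR Kb axis_nth3 power2_eq_square)
  have ips: "ipK K eps (c *\<^sub>R a) b = c * ipK K eps a b" "ipK K eps a (c *\<^sub>R b) = c * ipK K eps a b" for a b c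
    by (simp_all add: ipK_def matrix_vector_mult_scaleR algebra_simps)
  have NL: "LK K DX0 DX1 DX2 N w = (eps^2 * a0) *\<^sub>R LK K DX0 DX1 DX2 (X0 p) w" for w
    unfolding N by (rule LKh)
  have DXN: "DX0 N = (eps^2 * a0) *\<^sub>R DX0 (X0 p)" "DX1 N = (eps^2 * a0) *\<^sub>R DX1 (X0 p)"
    "DX2 N = (eps^2 * a0) *\<^sub>R DX2 (X0 p)"
    using l0 l1 l2 by (simp_all add: N linear_scale)
  have LNs: "LK K DX0 DX1 DX2 h N = (eps^2 * a0) *\<^sub>R DX0 h" for h
    unfolding N LKs LKb ..
  show "GamP (DGm eps X0 X1 X2 p) N (X1 p) (X1 p) =
           - a0 * (K *v DX1 (X1 p))$1 + eps^2 * (a0 * (- (K *v DX0 (X1 p))$2 + (K *v DX1 (X0 p))$2))"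
    unfolding GamP_def ID NL LNs LKb ips ipb ipN by (simp add: DXN matrix_vector_mult_scaleR algebra_simps)
  show "GamP (DGm eps X0 X1 X2 p) N (X2 p) (X2 p) =
           - a0 * (K *v DX2 (X2 p))$1 + eps^2 * (a0 * (- (K *v DX0 (X2 p))$3 + (K *v DX2 (X0 p))$3))"
    unfolding GamP_def ID NL LNs LKb ips ipb ipN by (simp add: DXN matrix_vector_mult_scaleR algebra_simps)
  show "GamP (DGm eps X0 X1 X2 p) N (X1 p) (X2 p) =
           - (a0/2) * ((K *v DX2 (X1 p))$1 + (K *v DX1 (X2 p))$1)
           + eps^2 * ((a0/2) * (- (K *v DX0 (X1 p))$3 - (K *v DX0 (X2 p))$2 + (K *v DX1 (X0 p))$3 + (K *v DX2 (X0 p))$2))"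
    unfolding GamP_def ID NL LNs LKb ips ipb ipN by (simp add: DXN matrix_vector_mult_scaleR algebra_simps)
qed

lemma bigO_final:
  fixes F :: "real \<Rightarrow> real"
  assumes "\<forall>eps>0. F eps = C1 + eps^2 * C2"
  shows "F \<in> O[at_right 0](\<lambda>_. 1)"
proof (rule bigoI[where c = "\<bar>C1\<bar> + \<bar>C2\<bar>"])
  show "\<forall>\<^sub>F x in at_right 0. norm (F x) \<le> (\<bar>C1\<bar> + \<bar>C2\<bar>) * norm (1::real)"
  proof (rule eventually_at_rightI[of 0 1])
    fix x :: real assume x: "x \<in> {0<..<1}"
    then have x2: "x^2 \<le> 1" "0 \<le> x^2" by (auto simp: power_le_one)
    have "\<bar>F x\<bar> = \<bar>C1 + x^2 * C2\<bar>" using assms x by auto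
    also have "\<dots> \<le> \<bar>C1\<bar> + x^2 * \<bar>C2\<bar>" by (simp add: abs_mult abs_triangle_ineq[THEN order_trans])
    also have "\<dots> \<le> \<bar>C1\<bar> + \<bar>C2\<bar>" using x2 by (simp add: mult_left_le_one_le)
    finally show "norm (F x) \<le> (\<bar>C1\<bar> + \<bar>C2\<bar>) * norm (1::real)" by simp
  qed simp
qed

theorem lemma3p1:
  fixes U :: "(real^3) set" and X0 X1 X2 :: "real^3 \<Rightarrow> real^3"
    and f :: "real^3 \<Rightarrow> real" and p :: "real^3"
  assumes U: "open U" "p \<in> U"
    and smooth: "smooth_on X0 U" "smooth_on X1 U" "smooth_on X2 U"
    and frame: "\<forall>x\<in>U. \<forall>a b. a *\<^sub>R X1 x + b *\<^sub>R X2 x = 0 \<longrightarrow> a = 0 \<and> b = 0"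
    and transverse: "\<forall>x\<in>U. X0 x \<notin> span {X1 x, X2 x}"
    and contact: "\<forall>x\<in>U. lie X1 X2 x \<notin> span {X1 x, X2 x}"
    and f_C2: "Ck_on 2 f U"
    and submersion: "\<forall>x\<in>U. \<exists>v. dderiv f x v \<noteq> 0"
    and p_in_S: "f p = 0"
    and characteristic: "tspace f p = span {X1 p, X2 p}"
  shows "\<forall>V Y1 Y2. open V \<and> p \<in> V \<and> V \<subseteq> U \<and> Ck_on 1 Y1 V \<and> Ck_on 1 Y2 V
           \<and> (\<forall>x\<in>V. f x = 0 \<longrightarrow> Y1 x \<in> tspace f x \<and> Y2 x \<in> tspace f x)
           \<and> (\<forall>a b. a *\<^sub>R Y1 p + b *\<^sub>R Y2 p = 0 \<longrightarrow> a = 0 \<and> b = 0)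
         \<longrightarrow> (\<lambda>eps. detII (gmetric eps X0 X1 X2) f Y1 Y2 p
               - (1 / eps^2) * (detHessH f X1 X2 p / (vf_app X0 f p)^2 - (c012 X0 X1 X2 p)^2 / 4))
             \<in> O[at_right 0](\<lambda>_. 1)"
proof (intro allI impI)
  fix V Y1 Y2
  assume H: "open V \<and> p \<in> V \<and> V \<subseteq> U \<and> Ck_on 1 Y1 V \<and> Ck_on 1 Y2 V
           \<and> (\<forall>x\<in>V. f x = 0 \<longrightarrow> Y1 x \<in> tspace f x \<and> Y2 x \<in> tspace f x)
           \<and> (\<forall>a b. a *\<^sub>R Y1 p + b *\<^sub>R Y2 p = 0 \<longrightarrow> a = 0 \<and> b = 0)"
  then have V: "open V" "p \<in> V" "V \<subseteq> U" and Y1C: "Ck_on 1 Y1 V" and Y2C: "Ck_on 1 Y2 V"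
    and Ytan: "\<forall>x\<in>V. f x = 0 \<longrightarrow> Y1 x \<in> tspace f x \<and> Y2 x \<in> tspace f x"
    and Yind: "\<forall>a b. a *\<^sub>R Y1 p + b *\<^sub>R Y2 p = 0 \<longrightarrow> a = 0 \<and> b = 0" by auto
  have fC2': "Ck_on (Suc (Suc 0)) f U" using f_C2 by (simp add: numeral_2_eq_2)
  have fdU: "\<forall>x\<in>U. f differentiable (at x)" using fC2' by simp
  have pdU: "\<forall>k. \<forall>x\<in>U. (\<lambda>x. dderiv f x (axis k 1)) differentiable (at x)" using fC2' by simp
  have pd: "\<forall>k. (\<lambda>x. dderiv f x (axis k 1)) differentiable (at p)" using pdU U by blast
  have fcont: "continuous_on V f"
    using fdU V by (meson continuous_at_imp_continuous_on differentiable_imp_continuous_within subsetD)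
  have Xd: "X differentiable (at p)" if "smooth_on X U" for X :: "real^3 \<Rightarrow> real^3"
  proof -
    have "Ck_on (Suc 0) X U" using that unfolding smooth_on_def by blast
    then show ?thesis using U by simp
  qed
  have Yd: "Y differentiable (at p)" if "Ck_on 1 Y V" for Y :: "real^3 \<Rightarrow> real^3"
    using that V by simp
  define DX0 where "DX0 = dderiv X0 p"
  define DX1 where "DX1 = dderiv X1 p"
  define DX2 where "DX2 = dderiv X2 p"
  define DY1 where "DY1 = dderiv Y1 p"
  define DY2 where "DY2 = dderiv Y2 p"
  have d0: "(X0 has_derivative DX0) (at p)" unfolding DX0_def by (rule dderiv_works[OF Xd[OF smooth(1)]])
  have d1: "(X1 has_derivative DX1) (at p)" unfolding DX1_def by (rule dderiv_works[OF Xd[OF smooth(2)]])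
  have d2: "(X2 has_derivative DX2) (at p)" unfolding DX2_def by (rule dderiv_works[OF Xd[OF smooth(3)]])
  have dy1: "(Y1 has_derivative DY1) (at p)" unfolding DY1_def by (rule dderiv_works[OF Yd[OF Y1C]])
  have dy2: "(Y2 has_derivative DY2) (at p)" unfolding DY2_def by (rule dderiv_works[OF Yd[OF Y2C]])
  have lDX0: "linear DX0" using d0 has_derivative_linear by blast
  have lDX1: "linear DX1" using d1 has_derivative_linear by blast
  have lDX2: "linear DX2" using d2 has_derivative_linear by blast
  have frp: "\<forall>a b. a *\<^sub>R X1 p + b *\<^sub>R X2 p = 0 \<longrightarrow> a = 0 \<and> b = 0" using frame U by blast
  have trp: "X0 p \<notin> span {X1 p, X2 p}" using transverse U by blast
  define g where "g = grad f p"
  have fdp: "f differentiable (at p)" using fdU U by blast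
  have df: "dderiv f p z = g \<bullet> z" for z unfolding g_def by (rule df_inner[OF fdp])
  have gx1: "g \<bullet> X1 p = 0" and gx2: "g \<bullet> X2 p = 0"
  proof -
    have "X1 p \<in> tspace f p" "X2 p \<in> tspace f p" unfolding characteristic by (auto intro: span_base)
    then show "g \<bullet> X1 p = 0" "g \<bullet> X2 p = 0" unfolding tspace_def df by auto
  qed
  define a0 where "a0 = g \<bullet> X0 p"
  have a0v: "vf_app X0 f p = a0" unfolding vf_app_def a0_def df ..
  have a0nz: "a0 \<noteq> 0"
  proof
    assume "a0 = 0"
    then have "X0 p \<in> tspace f p" unfolding tspace_def df a0_def by simp
    then show False using trp characteristic by simp
  qed
  define K where "K = matrix_inv (frame_mat 1 X0 X1 X2 p)"
  have Kdec: "w = (K *v w)$1 *\<^sub>R X0 p + (K *v w)$2 *\<^sub>R X1 p + (K *v w)$3 *\<^sub>R X2 p" for w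
    unfolding K_def by (rule K_decomp[of X1 p X2 X0, OF frp trp])
  have Kb: "K *v X0 p = axis 1 1" "K *v X1 p = axis 2 1" "K *v X2 p = axis 3 1"
    unfolding K_def using K_basis[of X1 p X2 X0, OF frp trp] by auto
  have gK: "g \<bullet> w = a0 * (K *v w)$1" for w
  proof -
    have "g \<bullet> w = g \<bullet> ((K *v w)$1 *\<^sub>R X0 p + (K *v w)$2 *\<^sub>R X1 p + (K *v w)$3 *\<^sub>R X2 p)"
      using Kdec[of w] by simp
    also have "\<dots> = a0 * (K *v w)$1" by (simp add: inner_add_right gx1 gx2 a0_def)
    finally show ?thesis .
  qed
  have hZ: "((\<lambda>x. dderiv f x (Z x)) has_derivative (\<lambda>u. dderiv f p (DZ u) + Hs f p u (Z p))) (at p)"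
    if "(Z has_derivative DZ) (at p)" for Z DZ
    using deriv_hZ[OF U fdU pd that] by (simp add: Hs_def)
  have Hsym: "Hs f p u z = Hs f p z u" for u z by (rule Hs_sym[OF U fdU pd])
  have XX: "vf_app Xi (vf_app Xj f) p = a0 * (K *v DXj (Xi p))$1 + Hs f p (Xi p) (Xj p)"
    if "(Xj has_derivative DXj) (at p)" for Xi Xj DXj
  proof -
    have "vf_app Xj f = (\<lambda>x. dderiv f x (Xj x))" by (rule ext) (simp add: vf_app_def)
    then have "vf_app Xi (vf_app Xj f) p = dderiv (\<lambda>x. dderiv f x (Xj x)) p (Xi p)" by (simp add: vf_app_def)
    also have "\<dots> = dderiv f p (DXj (Xi p)) + Hs f p (Xi p) (Xj p)" using dderiv_at[OF hZ[OF that]] by simp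
    finally show ?thesis by (simp add: df gK)
  qed
  define lw where "lw = DX1 (X2 p) - DX2 (X1 p)"
  have liep: "lie X2 X1 p = lw" unfolding lie_def lw_def DX1_def DX2_def ..
  have cval: "c012 X0 X1 X2 p = (K *v lw)$1"
  proof -
    have ex: "\<exists>c1 c2. lie X2 X1 p = c1 *\<^sub>R X1 p + c2 *\<^sub>R X2 p + (K *v lw)$1 *\<^sub>R X0 p"
    proof (intro exI)
      show "lie X2 X1 p = (K *v lw)$2 *\<^sub>R X1 p + (K *v lw)$3 *\<^sub>R X2 p + (K *v lw)$1 *\<^sub>R X0 p"
        unfolding liep by (subst Kdec[of lw]) (simp add: algebra_simps)
    qed
    have un: "c0 = (K *v lw)$1" if ex0: "\<exists>c1 c2. lie X2 X1 p = c1 *\<^sub>R X1 p + c2 *\<^sub>R X2 p + c0 *\<^sub>R X0 p" for c0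
    proof -
      obtain c1 c2 where "lie X2 X1 p = c1 *\<^sub>R X1 p + c2 *\<^sub>R X2 p + c0 *\<^sub>R X0 p" using ex0 by blast
      then have "lw = c1 *\<^sub>R X1 p + c2 *\<^sub>R X2 p + c0 *\<^sub>R X0 p" using liep by simp
      then have "K *v lw = c1 *\<^sub>R axis 2 1 + c2 *\<^sub>R axis 3 1 + c0 *\<^sub>R axis 1 1"
        by (simp add: matrix_vector_right_distrib matrix_vector_mult_scaleR Kb)
      then show ?thesis by (simp add: axis_nth3)
    qed
    show ?thesis unfolding c012_def
    proof (rule the_equality)
      show "\<exists>c1 c2. lie X2 X1 p = c1 *\<^sub>R X1 p + c2 *\<^sub>R X2 p + (K *v lw)$1 *\<^sub>R X0 p" by (rule ex)
      fix c0 assume "\<exists>c1 c2. lie X2 X1 p = c1 *\<^sub>R X1 p + c2 *\<^sub>R X2 p + c0 *\<^sub>R X0 p"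
      then show "c0 = (K *v lw)$1" by (rule un)
    qed
  qed
  have ytan: "Y1 p \<in> tspace f p" "Y2 p \<in> tspace f p" using Ytan V p_in_S by auto
  then have gy: "g \<bullet> Y1 p = 0" "g \<bullet> Y2 p = 0" unfolding tspace_def df by auto
  define m11 where "m11 = (K *v Y1 p)$2"
  define m12 where "m12 = (K *v Y1 p)$3"
  define m21 where "m21 = (K *v Y2 p)$2"
  define m22 where "m22 = (K *v Y2 p)$3"
  have Ky1: "(K *v Y1 p)$1 = 0" using gy(1) gK[of "Y1 p"] a0nz by simp
  have Ky2: "(K *v Y2 p)$1 = 0" using gy(2) gK[of "Y2 p"] a0nz by simp
  have y1: "Y1 p = m11 *\<^sub>R X1 p + m12 *\<^sub>R X2 p"
    using Kdec[of "Y1 p"] Ky1 by (simp add: m11_def m12_def)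
  have y2: "Y2 p = m21 *\<^sub>R X1 p + m22 *\<^sub>R X2 p"
    using Kdec[of "Y2 p"] Ky2 by (simp add: m21_def m22_def)
  have detM: "m11*m22 - m12*m21 \<noteq> 0"
  proof
    assume d: "m11*m22 - m12*m21 = 0"
    have "m22 *\<^sub>R Y1 p + (-m12) *\<^sub>R Y2 p = (m11*m22 - m12*m21) *\<^sub>R X1 p"
      unfolding y1 y2 by (simp add: algebra_simps)
    then have "m22 *\<^sub>R Y1 p + (-m12) *\<^sub>R Y2 p = 0" using d by simp
    then have "m22 = 0 \<and> -m12 = 0" using Yind by blast
    then have a: "m22 = 0" "m12 = 0" by auto
    have "m21 *\<^sub>R Y1 p + (-m11) *\<^sub>R Y2 p = (m21*m12 - m11*m22) *\<^sub>R X2 p"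
      unfolding y1 y2 by (simp add: algebra_simps)
    then have "m21 *\<^sub>R Y1 p + (-m11) *\<^sub>R Y2 p = 0" using d by (simp add: algebra_simps)
    then have "m21 = 0 \<and> -m11 = 0" using Yind by blast
    then have b: "m21 = 0" "m11 = 0" by auto
    have "1 *\<^sub>R Y1 p + 0 *\<^sub>R Y2 p = 0" using y1 a b by simp
    then have "(1::real) = 0 \<and> (0::real) = 0" using Yind by blast
    then show False by simp
  qed
  have tang: "dderiv f p (DZ v) + Hs f p v (Z p) = 0"
    if Zd: "(Z has_derivative DZ) (at p)" and Zt: "\<forall>x\<in>V. f x = 0 \<longrightarrow> Z x \<in> tspace f x"
      and v: "v \<in> tspace f p" for Z DZ v
  proof -
    have fd': "(f has_derivative dderiv f p) (at p)" by (rule dderiv_works[OF fdp])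
    have fw: "dderiv f p (X0 p) \<noteq> 0" using a0nz by (simp add: df a0_def)
    have fv: "dderiv f p v = 0" using v by (simp add: tspace_def)
    have hz: "\<forall>x\<in>V. f x = 0 \<longrightarrow> dderiv f x (Z x) = 0" using Zt by (simp add: tspace_def)
    show ?thesis using tangent[OF V(1) V(2) fcont fd' p_in_S fw fv hZ[OF Zd] hz] by simp
  qed
  have Y1t: "\<forall>x\<in>V. f x = 0 \<longrightarrow> Y1 x \<in> tspace f x" and Y2t: "\<forall>x\<in>V. f x = 0 \<longrightarrow> Y2 x \<in> tspace f x"
    using Ytan by auto
  have t11: "dderiv f p (DY1 (Y1 p)) = - Hs f p (Y1 p) (Y1 p)" using tang[OF dy1 Y1t ytan(1)] by linarith
  have t22: "dderiv f p (DY2 (Y2 p)) = - Hs f p (Y2 p) (Y2 p)" using tang[OF dy2 Y2t ytan(2)] by linarith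
  have t12: "dderiv f p (DY2 (Y1 p)) = - Hs f p (Y1 p) (Y2 p)" using tang[OF dy2 Y2t ytan(1)] by linarith
  define P11 where "P11 = - Hs f p (X1 p) (X1 p) - a0 * (K *v DX1 (X1 p))$1"
  define P22 where "P22 = - Hs f p (X2 p) (X2 p) - a0 * (K *v DX2 (X2 p))$1"
  define P12 where "P12 = - Hs f p (X1 p) (X2 p) - (a0/2) * ((K *v DX2 (X1 p))$1 + (K *v DX1 (X2 p))$1)"
  define R11 where "R11 = a0 * (- (K *v DX0 (X1 p))$2 + (K *v DX1 (X0 p))$2)"
  define R22 where "R22 = a0 * (- (K *v DX0 (X2 p))$3 + (K *v DX2 (X0 p))$3)"
  define R12 where "R12 = (a0/2) * (- (K *v DX0 (X1 p))$3 - (K *v DX0 (X2 p))$2 + (K *v DX1 (X0 p))$3 + (K *v DX2 (X0 p))$2)"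
  have key: "detII (gmetric eps X0 X1 X2) f Y1 Y2 p
      = ((P11 + eps^2 * R11) * (P22 + eps^2 * R22) - (P12 + eps^2 * R12)^2) / (eps^2 * a0^2)"
    if eps: "eps > 0" for eps
  proof -
    have epsnz: "eps \<noteq> 0" using eps by simp
    define Fe where "Fe = frame_mat eps X0 X1 X2 p"
    define A where "A = matrix_inv Fe"
    define G where "G = gmetric eps X0 X1 X2"
    define DG where "DG = DGm eps X0 X1 X2 p"
    have invF: "invertible Fe" unfolding Fe_def by (rule frame_invertible[of eps X1 p X2 X0, OF epsnz frp trp])
    have AF: "A ** Fe = mat 1" and FA: "Fe ** A = mat 1" using inv_props[OF invF] by (auto simp: A_def)
    have Ainv: "invertible A" using AF FA invertible_def by blast
    have iA: "matrix_inv A = Fe" by (rule inv_unique[OF AF])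
    have GA: "G p = transpose A ** A" by (simp add: G_def gmetric_def A_def Fe_def)
    have Q: "matrix_inv (G p) = Fe ** transpose Fe" using gram_inv(2)[OF Ainv] iA GA by simp
    have Ginv: "invertible (G p)" using gram_inv(3)[OF Ainv] GA by simp
    have tcol: "(transpose M *v v) $ j = v \<bullet> (M *v axis j 1)" for M :: "real^3^3" and v j
    proof -
      have "(transpose M *v v) $ j = (\<Sum>i\<in>UNIV. M$i$j * v$i)" by (simp add: matrix_vector_mult_def transpose_def del: transpose_matrix_vector)
      also have "\<dots> = v \<bullet> (M *v axis j 1)" by (simp add: inner_vec_def mat_entry[symmetric] mult.commute)
      finally show ?thesis .
    qed
    have Fe_ax: "Fe *v axis 1 1 = eps *\<^sub>R X0 p" "Fe *v axis 2 1 = X1 p" "Fe *v axis 3 1 = X2 p"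
      by (simp_all add: Fe_def frame_mult axis_nth3)
    have TFg: "transpose Fe *v g = (eps * a0) *\<^sub>R axis 1 1"
      by (simp add: vec_eq_iff forall_3 tcol Fe_ax axis_nth3 gx1 gx2 a0_def del: transpose_matrix_vector)
    define N where "N = matrix_inv (G p) *v g"
    have Nv: "N = (eps^2 * a0) *\<^sub>R X0 p"
    proof -
      have "N = Fe *v (transpose Fe *v g)" unfolding N_def Q by (simp only: matrix_vector_mul_assoc)
      also have "\<dots> = (eps * a0) *\<^sub>R (eps *\<^sub>R X0 p)" unfolding TFg by (simp only: matrix_vector_mult_scaleR Fe_ax)
      finally show ?thesis by (simp add: power2_eq_square)
    qed
    have gN: "g \<bullet> N = eps^2 * a0^2" unfolding Nv by (simp add: a0_def power2_eq_square)
    have gNnz: "g \<bullet> N \<noteq> 0" unfolding gN using epsnz a0nz by simp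
    have GN: "G p *v N = g" unfolding N_def using inv_props[OF Ginv] by (simp add: matrix_vector_mul_assoc)
    have nc: "ncomp G f p w = ((g \<bullet> w) / (g \<bullet> N)) *\<^sub>R N" for w
      using ncomp_formula[of f p G A w, OF fdp GA Ainv] gNnz unfolding g_def N_def by simp
    have gipNN: "gip G p (a *\<^sub>R N) (b *\<^sub>R N) = a * b * (g \<bullet> N)" for a b
      unfolding gip_def by (simp add: matrix_vector_mult_scaleR GN inner_commute)
    have gipA: "gip G p u v = (A *v u) \<bullet> (A *v v)" for u v
    proof -
      have "gip G p u v = u \<bullet> (transpose A *v (A *v v))" unfolding gip_def GA by (simp only: matrix_vector_mul_assoc)
      also have "\<dots> = (A *v u) \<bullet> (A *v v)" by (subst inner_mat) simp
      finally show ?thesis .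
    qed
    have gipK: "gip G p u v = ipK K eps u v" for u v
      unfolding gipA A_def Fe_def K_def ipK_def by (rule G4[of X1 p X2 X0 eps, OF frp trp epsnz])
    have Ky1: "K *v Y1 p = m11 *\<^sub>R axis 2 1 + m12 *\<^sub>R axis 3 1"
      unfolding y1 by (simp add: matrix_vector_right_distrib matrix_vector_mult_scaleR Kb)
    have Ky2: "K *v Y2 p = m21 *\<^sub>R axis 2 1 + m22 *\<^sub>R axis 3 1"
      unfolding y2 by (simp add: matrix_vector_right_distrib matrix_vector_mult_scaleR Kb)
    have den: "gip G p (Y1 p) (Y1 p) * gip G p (Y2 p) (Y2 p) - (gip G p (Y1 p) (Y2 p))^2 = (m11*m22 - m12*m21)^2"
      unfolding gipK ipK_def Ky1 Ky2 by (simp add: axis_nth3 power2_eq_square algebra_simps)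
    have der: "dderiv (\<lambda>y. G y $ j $ l) p (axis i 1) = DG (axis i 1) $ j $ l" for i j l
    proof -
      have "((\<lambda>y. G y $ j $ l) has_derivative (\<lambda>h. DG h $ j $ l)) (at p)"
        unfolding G_def DG_def by (rule gmetric_deriv(1)[OF U epsnz frame transverse d0 d1 d2])
      then have "dderiv (\<lambda>y. G y $ j $ l) p = (\<lambda>h. DG h $ j $ l)" by (rule dderiv_at)
      then show ?thesis by simp
    qed
    have entlin: "linear (\<lambda>h. DG h $ j $ l)" for j l
    proof -
      have "((\<lambda>y. G y $ j $ l) has_derivative (\<lambda>h. DG h $ j $ l)) (at p)"
        unfolding G_def DG_def by (rule gmetric_deriv(1)[OF U epsnz frame transverse d0 d1 d2])
      then show ?thesis using has_derivative_linear by blast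
    qed
    have DAf: "\<And>h. DAm (frame_mat eps X0 X1 X2) p h = - (matrix_inv (frame_mat eps X0 X1 X2 p)
            ** frame_mat eps (\<lambda>_. DX0 h) (\<lambda>_. DX1 h) (\<lambda>_. DX2 h) p ** matrix_inv (frame_mat eps X0 X1 X2 p))"
      by (rule gmetric_deriv(2)[OF U epsnz frame transverse d0 d1 d2])
    have linDG: "linear DG"
    proof (rule linearI)
      fix x y show "DG (x + y) = DG x + DG y"
        using linear_add[OF entlin] by (simp add: vec_eq_iff)
    next
      fix c x show "DG (c *\<^sub>R x) = c *\<^sub>R DG x"
        using linear_scale[OF entlin] by (simp add: vec_eq_iff)
    qed
    have Qsym: "matrix_inv (G p) $ k $ l = matrix_inv (G p) $ l $ k" for k l
      unfolding Q by (simp add: matrix_matrix_mult_def transpose_def mult.commute)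
    have tadd: "transpose (M1 + M2) = transpose M1 + transpose M2" for M1 M2 :: "real^3^3"
      by (simp add: vec_eq_iff transpose_def)
    have DGsym: "transpose (DG h) = DG h" for h
      unfolding DG_def DGm_def by (simp add: tadd matrix_transpose_mul add.commute)
    have LCg: "g \<bullet> LC_conn G Ya Yb p = dderiv f p (dderiv Yb p (Ya p)) + GamP DG N (Ya p) (Yb p)" for Ya Yb
    proof -
      have "g \<bullet> LC_conn G Ya Yb p = g \<bullet> dderiv Yb p (Ya p)
          + (\<Sum>k\<in>UNIV. g$k * (\<Sum>i\<in>UNIV. \<Sum>j\<in>UNIV. christ G p k i j * Ya p $ i * Yb p $ j))"
        unfolding LC_conn_def by (simp add: inner_add_right inner_vec_def distrib_left sum.distrib)
      also have "(\<Sum>k\<in>UNIV. g$k * (\<Sum>i\<in>UNIV. \<Sum>j\<in>UNIV. christ G p k i j * Ya p $ i * Yb p $ j))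
          = GamP DG N (Ya p) (Yb p)"
        unfolding GamP_def N_def by (rule christ_contract[OF der linDG Qsym])
      finally show ?thesis by (simp add: df)
    qed
    define Phi where "Phi u v = - Hs f p u v + GamP DG N u v" for u v
    have B11: "g \<bullet> LC_conn G Y1 Y1 p = Phi (Y1 p) (Y1 p)" using LCg[of Y1 Y1] t11 by (simp add: Phi_def DY1_def)
    have B22: "g \<bullet> LC_conn G Y2 Y2 p = Phi (Y2 p) (Y2 p)" using LCg[of Y2 Y2] t22 by (simp add: Phi_def DY2_def)
    have B12: "g \<bullet> LC_conn G Y1 Y2 p = Phi (Y1 p) (Y2 p)" using LCg[of Y1 Y2] t12 by (simp add: Phi_def DY2_def)
    have Phis: "Phi (X2 p) (X1 p) = Phi (X1 p) (X2 p)"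
    proof -
      have "Hs f p (X2 p) (X1 p) = Hs f p (X1 p) (X2 p)" by (rule Hsym)
      moreover have "GamP DG N (X2 p) (X1 p) = GamP DG N (X1 p) (X2 p)" by (rule GamP_sym[OF DGsym])
      ultimately show ?thesis by (simp add: Phi_def)
    qed
    have Phil: "Phi (a1 *\<^sub>R u1 + a2 *\<^sub>R u2) w = a1 * Phi u1 w + a2 * Phi u2 w" for a1 a2 u1 u2 w
      unfolding Phi_def Hs_bilinear(1)[OF pd] GamP_bilin(1)[OF linDG] by (simp add: algebra_simps)
    have Phir: "Phi w (a1 *\<^sub>R u1 + a2 *\<^sub>R u2) = a1 * Phi w u1 + a2 * Phi w u2" for a1 a2 u1 u2 w
      unfolding Phi_def Hs_bilinear(2)[OF pd] GamP_bilin(2)[OF linDG] by (simp add: algebra_simps)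
    have Phib: "Phi (a1 *\<^sub>R X1 p + a2 *\<^sub>R X2 p) (b1 *\<^sub>R X1 p + b2 *\<^sub>R X2 p)
        = a1*a1*0 + a1*b1*Phi (X1 p) (X1 p) + a1*b2*Phi (X1 p) (X2 p) + a2*b1*Phi (X1 p) (X2 p) + a2*b2*Phi (X2 p) (X2 p)"
      for a1 a2 b1 b2
      unfolding Phil Phir Phis by (simp add: algebra_simps)
    note GE = GamP_explicit[of X1 p X2 X0 eps DX0 DX1 DX2 K N a0, OF frp trp epsnz DAf lDX0 lDX1 lDX2 Kb K_def Nv]
    have Ph11: "Phi (X1 p) (X1 p) = P11 + eps^2 * R11" unfolding Phi_def DG_def GE(1) P11_def R11_def by simp
    have Ph22: "Phi (X2 p) (X2 p) = P22 + eps^2 * R22" unfolding Phi_def DG_def GE(2) P22_def R22_def by simp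
    have Ph12: "Phi (X1 p) (X2 p) = P12 + eps^2 * R12" unfolding Phi_def DG_def GE(3) P12_def R12_def by simp
    have quart: "Phi (Y1 p) (Y1 p) * Phi (Y2 p) (Y2 p) - (Phi (Y1 p) (Y2 p))^2
        = (m11*m22 - m12*m21)^2 * ((P11 + eps^2 * R11) * (P22 + eps^2 * R22) - (P12 + eps^2 * R12)^2)"
      unfolding y1 y2 Phib Ph11 Ph22 Ph12 by (simp add: power2_eq_square algebra_simps)
    have sffv: "sff G f Ya Yb p = ((g \<bullet> LC_conn G Ya Yb p) / (g \<bullet> N)) *\<^sub>R N" for Ya Yb
      unfolding sff_def nc ..
    have "detII G f Y1 Y2 p = ((Phi (Y1 p) (Y1 p) * Phi (Y2 p) (Y2 p) - (Phi (Y1 p) (Y2 p))^2) / (g \<bullet> N))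
        / (m11*m22 - m12*m21)^2"
      unfolding detII_def den sffv gipNN B11 B22 B12 using gNnz by (simp add: field_simps power2_eq_square)
    also have "\<dots> = ((P11 + eps^2 * R11) * (P22 + eps^2 * R22) - (P12 + eps^2 * R12)^2) / (eps^2 * a0^2)"
      unfolding quart gN using detM by simp
    finally show ?thesis unfolding G_def .
  qed
  have HX: "detHessH f X1 X2 p / (vf_app X0 f p)^2 - (c012 X0 X1 X2 p)^2 / 4 = (P11 * P22 - P12^2) / a0^2"
  proof -
    have e11: "vf_app X1 (vf_app X1 f) p = a0 * (K *v DX1 (X1 p))$1 + Hs f p (X1 p) (X1 p)" by (rule XX[OF d1])
    have e22: "vf_app X2 (vf_app X2 f) p = a0 * (K *v DX2 (X2 p))$1 + Hs f p (X2 p) (X2 p)" by (rule XX[OF d2])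
    have e12: "vf_app X1 (vf_app X2 f) p = a0 * (K *v DX2 (X1 p))$1 + Hs f p (X1 p) (X2 p)" by (rule XX[OF d2])
    have e21: "vf_app X2 (vf_app X1 f) p = a0 * (K *v DX1 (X2 p))$1 + Hs f p (X1 p) (X2 p)"
      using XX[OF d1, of X2] Hsym by simp
    have c: "c012 X0 X1 X2 p = (K *v DX1 (X2 p))$1 - (K *v DX2 (X1 p))$1"
      unfolding cval lw_def by (simp add: matrix_vector_mult_diff_distrib)
    show ?thesis unfolding detHessH_def e11 e22 e12 e21 c a0v P11_def P22_def P12_def
      using a0nz by (simp add: field_simps power2_eq_square)
  qed
  show "(\<lambda>eps. detII (gmetric eps X0 X1 X2) f Y1 Y2 p
               - (1 / eps^2) * (detHessH f X1 X2 p / (vf_app X0 f p)^2 - (c012 X0 X1 X2 p)^2 / 4))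
             \<in> O[at_right 0](\<lambda>_. 1)"
  proof (rule bigO_final[of _ "(P11 * R22 + R11 * P22 - 2 * P12 * R12) / a0^2"
        "(R11 * R22 - R12^2) / a0^2"], intro allI impI)
    fix eps :: real assume eps: "eps > 0"
    show "detII (gmetric eps X0 X1 X2) f Y1 Y2 p
               - (1 / eps^2) * (detHessH f X1 X2 p / (vf_app X0 f p)^2 - (c012 X0 X1 X2 p)^2 / 4)
          = (P11 * R22 + R11 * P22 - 2 * P12 * R12) / a0^2 + eps^2 * ((R11 * R22 - R12^2) / a0^2)"
      unfolding key[OF eps] HX using eps a0nz
      by (simp add: field_simps power2_eq_square)
  qed
qed

end
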